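(* Let $E_8$ denote the complex simple simply-connected Lie group of type $E_8$, with Lie algebra $\mathfrak{e}_8$, simple roots $\alpha_1,\dots,\alpha_8$, fundamental weights $\omega_1,\dots,\omega_8$, and fundamental characters $\chi_1,\dots,\chi_8$ ($\chi_l$ the character of the irreducible representation with highest weight $\omega_l$). For each $k$ with $0\le k\le 248$, let $N^{(k)}_\iota\in\mathbb{Z}$, $\iota\in\mathbb{Z}_{\ge 0}^8$, be the unique integers (finitely many nonzero) such that $$\chi_{\wedge^k \mathfrak{e}_8}=\sum_{\iota\in\mathbb{Z}_{\ge0}^8} N^{(k)}_\iota \prod_{l=1}^8 \chi_l^{\iota_l}$$ in the representation ring $\mathrm{Rep}(E_8)\cong\mathbb{Z}[\chi_1,\dots,\chi_8]$, where $\wedge^k\mathfrak{e}_8$ is the $k$-th exterior power of the adjoint representation. Let $e_{jk}$ denote the coefficient of $\alpha_k$ in the expansion of $\omega_j$ in the basis of simple roots (i.e. $e_{jk}=(C^{-1})_{jk}$, with $C$ the Cartan matrix of $E_8$), and define the set of admissible exponents $$\mathfrak{I}=\Big\{\iota\in\mathbb{Z}_{\ge0}^8 \;\Big|\; \sum_{j=1}^8 \iota_j e_{jk}\le 2\sum_{j=1}^8 e_{jk}\ \text{ for all } k=1,\dots,8\Big\}.$$ Then for every $\iota\in\mathbb{Z}_{\ge0}^8$ with $\iota\notin\mathfrak{I}$, one has $N^{(k)}_\iota=0$ for all $k$.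
   Context: The representation ring $\mathrm{Rep}(E_8)$ (equivalently the ring of Weyl-invariant regular functions on the maximal torus, via characters) is the polynomial ring over $\mathbb{Z}$ in the fundamental characters $\chi_1,\dots,\chi_8$, so the coefficients $N^{(k)}_\iota$ are well defined. The labelling of simple roots, fundamental weights and fundamental characters is any fixed one, used consistently (fundamental weight $\omega_j$ dual to the simple coroot of $\alpha_j$). Note that $2\sum_j e_{jk}$ is the $\alpha_k$-coefficient of $2\rho=2\sum_j\omega_j$, so $\iota\in\mathfrak{I}$ means that $2\rho-\sum_j\iota_j\omega_j$ has nonnegative coefficients in the simple-root basis. *)

theory Defs
  imports Complex_Main "HOL-Library.Numeral_Type" "HOL-Library.Poly_Mapping" "HOL-Library.Function_Algebras"
begin

text \<open>Index type for simple roots / fundamental weights: the numeral type 8,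
  with elements 0,...,7 (Bourbaki node i corresponds to element i-1).
  Weights are written in the basis of fundamental weights:
  a weight is a function 8 => int giving its omega-coordinates.\<close>

type_synonym weight = "8 \<Rightarrow> int"

text \<open>The representation ring (Weyl-invariant part of the group ring of the weight
  lattice); we work inside the full group ring Z[weight lattice].\<close>
type_synonym grpring = "weight \<Rightarrow>\<^sub>0 int"

definition e8_edges :: "8 set set" where
  "e8_edges = {{0,2},{2,3},{3,4},{4,5},{5,6},{6,7},{1,3}}"

text \<open>Cartan matrix of E8 (Bourbaki labelling): C i j = <alpha_i, alpha_j^vee>.\<close>
definition cartan :: "8 \<Rightarrow> 8 \<Rightarrow> int" where
  "cartan i j = (if i = j then 2 else if {i, j} \<in> e8_edges then -1 else 0)"

text \<open>Simple root alpha_i in fundamental-weight coordinates.\<close>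
definition alpha :: "8 \<Rightarrow> weight" where
  "alpha i = (\<lambda>j. cartan i j)"

definition omega :: "8 \<Rightarrow> weight" where
  "omega l = (\<lambda>j. if j = l then 1 else 0)"

definition einv :: "8 \<Rightarrow> 8 \<Rightarrow> rat" where
  "einv = (THE E. \<forall>j m. (\<Sum>k\<in>UNIV. E j k * of_int (cartan k m)) = (if j = m then 1 else 0))"

definition rootcoef :: "weight \<Rightarrow> 8 \<Rightarrow> rat" where
  "rootcoef lam k = (\<Sum>j\<in>UNIV. of_int (lam j) * einv j k)"

definition sref :: "8 \<Rightarrow> weight \<Rightarrow> weight" where
  "sref i lam = (\<lambda>j. lam j - lam i * cartan i j)"

inductive_set weyl :: "(weight \<Rightarrow> weight) set" where
  weyl_id: "id \<in> weyl"
| weyl_step: "w \<in> weyl \<Longrightarrow> sref i \<circ> w \<in> weyl"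

definition roots :: "weight set" where
  "roots = {w (alpha i) | w i. w \<in> weyl}"

definition pos_roots :: "weight set" where
  "pos_roots = {\<beta> \<in> roots. \<forall>k. rootcoef \<beta> k \<ge> 0}"

text \<open>Sign of a Weyl group element: (-1)^(length), length = number of positive
  roots sent to negative roots.\<close>
definition wsign :: "(weight \<Rightarrow> weight) \<Rightarrow> int" where
  "wsign w = (-1) ^ card {\<beta> \<in> pos_roots. w \<beta> \<notin> pos_roots}"

definition ex :: "weight \<Rightarrow> grpring" where
  "ex \<mu> = Poly_Mapping.single \<mu> 1"

definition rho :: weight where
  "rho = (\<lambda>_. 1)"

definition alt :: "weight \<Rightarrow> grpring" where
  "alt \<mu> = (\<Sum>w\<in>weyl. of_int (wsign w) * ex (w \<mu>))"

text \<open>Character of the irreducible representation of highest weight lambda,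
  characterised by the Weyl character formula chi_lambda * A_rho = A_(lambda+rho).\<close>
definition irrchar :: "weight \<Rightarrow> grpring" where
  "irrchar lam = (THE \<chi>. \<chi> * alt rho = alt (lam + rho))"

definition fundchar :: "8 \<Rightarrow> grpring" where
  "fundchar l = irrchar (omega l)"

text \<open>Weights of the adjoint representation, with multiplicity: each root once
  (Inl beta) and the zero weight 8 times (Inr i, the Cartan subalgebra).\<close>
definition adj_index :: "(weight + 8) set" where
  "adj_index = Inl ` roots \<union> Inr ` UNIV"

definition adj_wt :: "weight + 8 \<Rightarrow> weight" where
  "adj_wt x = (case x of Inl \<beta> \<Rightarrow> \<beta> | Inr _ \<Rightarrow> 0)"

text \<open>Character of the k-th exterior power of the adjoint representation:
  the k-th elementary symmetric function of the (multiset of) weights.\<close>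
definition extchar :: "nat \<Rightarrow> grpring" where
  "extchar k = (\<Sum>S\<in>{S. S \<subseteq> adj_index \<and> card S = k}. ex (\<Sum>x\<in>S. adj_wt x))"

definition fundmono :: "(8 \<Rightarrow> nat) \<Rightarrow> grpring" where
  "fundmono \<iota> = (\<Prod>l\<in>UNIV. fundchar l ^ \<iota> l)"

definition admissible :: "(8 \<Rightarrow> nat) set" where
  "admissible = {\<iota>. \<forall>k. (\<Sum>j\<in>UNIV. of_nat (\<iota> j) * einv j k) \<le> 2 * (\<Sum>j\<in>UNIV. einv j k)}"

end

theory Submission
  imports Defs
begin


lemma UNIV8: "(UNIV::8 set) = {0,1,2,3,4,5,6,7}"
proof -
  have "x \<in> {0,1,2,3,4,5,6,7}" for x :: 8
  proof (cases x rule: bit0_cases)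
    case (of_int z)
    then have "z \<in> {0,1,2,3,4,5,6,7}" by auto
    then show ?thesis using of_int by auto
  qed
  then show ?thesis by blast
qed

definition idx :: "8 \<Rightarrow> nat" where
  "idx i = (if i = 0 then 0 else if i = 1 then 1 else if i = 2 then 2 else if i = 3 then 3
     else if i = 4 then 4 else if i = 5 then 5 else if i = 6 then 6 else 7)"

lemma all8: "(\<forall>i::8. P i) \<longleftrightarrow> P 0 \<and> P 1 \<and> P 2 \<and> P 3 \<and> P 4 \<and> P 5 \<and> P 6 \<and> P 7"
  using UNIV8 by (metis UNIV_I insertE empty_iff)

lemma idx_lt: "idx i < 8"
  by (simp add: idx_def)

lemma of_nat_idx: "of_nat (idx i) = i"
proof -
  have "\<forall>i::8. of_nat (idx i) = i" unfolding all8 by (simp add: idx_def)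
  then show ?thesis by blast
qed

lemma idx_of_nat: "n < 8 \<Longrightarrow> idx (of_nat n) = n"
proof -
  assume "n < 8"
  then have "n \<in> {0,1,2,3,4,5,6,7}" by auto
  then show ?thesis by (auto simp: idx_def)
qed

lemma bij_idx: "bij_betw idx UNIV {0..<8}"
  unfolding bij_betw_def inj_on_def
  by (metis of_nat_idx idx_of_nat idx_lt atLeastLessThan_iff image_eqI subsetI subset_antisym
       image_subsetI zero_le UNIV_I)

lemma sum8: "(\<Sum>i\<in>UNIV. f (i::8)) = (\<Sum>n<8. f (of_nat n))"
proof -
  have "(\<Sum>n<8. f (of_nat n)) = (\<Sum>n\<in>{0..<8}. f (of_nat n))"
    by (simp add: lessThan_atLeast0)
  also have "\<dots> = (\<Sum>i\<in>UNIV. f (of_nat (idx i)))"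
    by (rule sum.reindex_bij_betw[OF bij_idx, symmetric])
  finally show ?thesis by (simp add: of_nat_idx)
qed

lemma all_lt8: "(\<forall>n<(8::nat). P n) \<longleftrightarrow> P 0 \<and> P 1 \<and> P 2 \<and> P 3 \<and> P 4 \<and> P 5 \<and> P 6 \<and> P 7"
  by (simp add: numeral_eq_Suc less_Suc_eq all_conj_distrib conj_ac)

definition Cn :: "nat \<Rightarrow> nat \<Rightarrow> int" where
  "Cn i j = (if i = j then 2 else if (i,j) \<in> set [(0,2),(2,0),(2,3),(3,2),(3,4),(4,3),(4,5),(5,4),(5,6),(6,5),(6,7),(7,6),(1,3),(3,1)] then -1 else 0)"

lemma cartan_Cn_aux: "\<forall>a<8. \<forall>b<8. cartan (of_nat a) (of_nat b) = Cn a b"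
  by (simp add: all_lt8 cartan_def Cn_def e8_edges_def doubleton_eq_iff)

lemma cartan_Cn: "cartan i j = Cn (idx i) (idx j)"
  using cartan_Cn_aux idx_lt of_nat_idx by metis

definition EL :: "int list list" where
  "EL = [[4,5,7,10,8,6,4,2], [5,8,10,15,12,9,6,3], [7,10,14,20,16,12,8,4], [10,15,20,30,24,18,12,6], [8,12,16,24,20,15,10,5], [6,9,12,18,15,12,8,4], [4,6,8,12,10,8,6,3], [2,3,4,6,5,4,3,2]]"

definition Einv :: "8 \<Rightarrow> 8 \<Rightarrow> int" where
  "Einv i j = EL ! idx i ! idx j"

lemma EC_list: "list_all (\<lambda>j. list_all (\<lambda>m. sum_list (map (\<lambda>k. EL!j!k * Cn k m) [0..<8]) = (if j=m then 1 else 0)) [0..<8]) [0..<8]"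
  by code_simp

lemma CE_list: "list_all (\<lambda>j. list_all (\<lambda>m. sum_list (map (\<lambda>k. Cn j k * EL!k!m) [0..<8]) = (if j=m then 1 else 0)) [0..<8]) [0..<8]"
  by code_simp

lemma EL_nonneg: "list_all (\<lambda>j. list_all (\<lambda>m. EL!j!m \<ge> 0) [0..<8]) [0..<8]"
  by code_simp


lemma list_all_upt8: "list_all P [0..<8] \<longleftrightarrow> (\<forall>n<8. P n)"
  by (auto simp: list_all_iff)

lemma sum_list_upt8: "sum_list (map f [0..<8]) = (\<Sum>n<8. f n)"
  by (simp add: sum_set_upt_conv_sum_list_nat[symmetric] lessThan_atLeast0)

lemma idx_inj: "idx i = idx j \<Longrightarrow> i = j"
  by (metis of_nat_idx)

lemma EC: "(\<Sum>k\<in>UNIV. Einv j k * cartan k m) = (if j = m then 1 else 0)"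
proof -
  have "(\<Sum>k\<in>UNIV. Einv j k * cartan k m) = (\<Sum>n<8. EL!idx j!n * Cn n (idx m))"
    by (simp add: sum8 Einv_def cartan_Cn idx_of_nat)
  also have "\<dots> = (if idx j = idx m then 1 else 0)"
    using EC_list idx_lt[of j] idx_lt[of m] unfolding list_all_upt8 sum_list_upt8 by blast
  finally show ?thesis using idx_inj by auto
qed

lemma CE: "(\<Sum>k\<in>UNIV. cartan j k * Einv k m) = (if j = m then 1 else 0)"
proof -
  have "(\<Sum>k\<in>UNIV. cartan j k * Einv k m) = (\<Sum>n<8. Cn (idx j) n * EL!n!idx m)"
    by (simp add: sum8 Einv_def cartan_Cn idx_of_nat)
  also have "\<dots> = (if idx j = idx m then 1 else 0)"
    using CE_list idx_lt[of j] idx_lt[of m] unfolding list_all_upt8 sum_list_upt8 by blast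
  finally show ?thesis using idx_inj by auto
qed

lemma Einv_nonneg: "Einv j m \<ge> 0"
  using EL_nonneg idx_lt[of j] idx_lt[of m] unfolding list_all_upt8 Einv_def by blast

lemma cartan_sym: "cartan i j = cartan j i"
  by (simp add: cartan_def insert_commute)

lemma cartan_diag[simp]: "cartan i i = 2"
  by (simp add: cartan_def)

lemma delta_mult[simp]: "(if P then 1 else 0) * (x::'a::semiring_1) = (if P then x else 0)"
  by simp
lemma mult_delta[simp]: "(x::'a::semiring_1) * (if P then 1 else 0) = (if P then x else 0)"
  by simp
lemma of_int_delta[simp]: "(of_int (if P then 1 else 0) :: 'a::ring_1) = (if P then 1 else 0)"
  by simp

lemma einv_eq: "einv = (\<lambda>j k. of_int (Einv j k))"
proof -
  let ?P = "\<lambda>E::8\<Rightarrow>8\<Rightarrow>rat. \<forall>j m. (\<Sum>k\<in>UNIV. E j k * of_int (cartan k m)) = (if j = m then 1 else 0)"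
  have ex: "?P (\<lambda>j k. of_int (Einv j k))"
  proof (intro allI)
    fix j m
    have "(\<Sum>k\<in>UNIV. (of_int (Einv j k) :: rat) * of_int (cartan k m)) = of_int (\<Sum>k\<in>UNIV. Einv j k * cartan k m)"
      by simp
    then show "(\<Sum>k\<in>UNIV. (of_int (Einv j k) :: rat) * of_int (cartan k m)) = (if j = m then 1 else 0)"
      by (simp add: EC)
  qed
  have uniq: "E = (\<lambda>j k. of_int (Einv j k))" if "?P E" for E
  proof (intro ext)
    fix j m
    have "(of_int (Einv j m)::rat) = (\<Sum>l\<in>UNIV. (if j = l then 1 else 0) * of_int (Einv l m))"
      by (simp only: delta_mult sum.delta) simp
    also have "\<dots> = (\<Sum>l\<in>UNIV. (\<Sum>k\<in>UNIV. E j k * of_int (cartan k l)) * of_int (Einv l m))"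
      using that by simp
    also have "\<dots> = (\<Sum>l\<in>UNIV. \<Sum>k\<in>UNIV. E j k * (of_int (cartan k l) * of_int (Einv l m)))"
      by (simp add: sum_distrib_right mult.assoc)
    also have "\<dots> = (\<Sum>k\<in>UNIV. \<Sum>l\<in>UNIV. E j k * (of_int (cartan k l) * of_int (Einv l m)))"
      by (rule sum.swap)
    also have "\<dots> = (\<Sum>k\<in>UNIV. E j k * (\<Sum>l\<in>UNIV. of_int (cartan k l) * of_int (Einv l m)))"
      by (simp add: sum_distrib_left)
    also have "\<dots> = (\<Sum>k\<in>UNIV. E j k * of_int (\<Sum>l\<in>UNIV. cartan k l * Einv l m))"
      by simp
    also have "\<dots> = E j m"
      by (simp add: CE)
    finally show "E j m = of_int (Einv j m)" by simp
  qed
  show ?thesis unfolding einv_def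
    by (rule the_equality[where P="?P", OF ex uniq]) assumption
qed

definition rc :: "weight \<Rightarrow> 8 \<Rightarrow> int" where
  "rc lam k = (\<Sum>j\<in>UNIV. lam j * Einv j k)"

lemma rootcoef_rc: "rootcoef lam k = of_int (rc lam k)"
  by (simp add: rootcoef_def rc_def einv_eq)

definition smul :: "int \<Rightarrow> weight \<Rightarrow> weight" where
  "smul c lam = (\<lambda>j. c * lam j)"

lemma rc_add[simp]: "rc (a + b) k = rc a k + rc b k"
  by (simp add: rc_def algebra_simps sum.distrib)
lemma rc_diff[simp]: "rc (a - b) k = rc a k - rc b k"
  by (simp add: rc_def algebra_simps sum_subtractf)
lemma rc_uminus[simp]: "rc (- a) k = - rc a k"
  by (simp add: rc_def sum_negf)
lemma rc_zero[simp]: "rc 0 k = 0"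
  by (simp add: rc_def)
lemma rc_smul[simp]: "rc (smul c a) k = c * rc a k"
  by (simp add: rc_def smul_def sum_distrib_left mult.assoc)
lemma sum_fun_apply: "(\<Sum>x\<in>A. f x) (j::'b) = (\<Sum>x\<in>A. f x j)"
  by (induction A rule: infinite_finite_induct) auto

lemma rc_sum: "rc (\<Sum>x\<in>A. f x) k = (\<Sum>x\<in>A. rc (f x) k)"
proof -
  have "rc (\<Sum>x\<in>A. f x) k = (\<Sum>j\<in>UNIV. \<Sum>x\<in>A. f x j * Einv j k)"
    by (simp add: rc_def sum_fun_apply sum_distrib_right)
  also have "\<dots> = (\<Sum>x\<in>A. \<Sum>j\<in>UNIV. f x j * Einv j k)"
    by (rule sum.swap)
  finally show ?thesis by (simp add: rc_def)
qed

lemma rc_alpha: "rc (alpha i) k = (if i = k then 1 else 0)"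
  by (simp add: rc_def alpha_def CE)

lemma expand: "lam j = (\<Sum>k\<in>UNIV. rc lam k * cartan k j)"
proof -
  have "(\<Sum>k\<in>UNIV. rc lam k * cartan k j) = (\<Sum>k\<in>UNIV. \<Sum>m\<in>UNIV. lam m * (Einv m k * cartan k j))"
    by (simp add: rc_def sum_distrib_right mult.assoc)
  also have "\<dots> = (\<Sum>m\<in>UNIV. \<Sum>k\<in>UNIV. lam m * (Einv m k * cartan k j))"
    by (rule sum.swap)
  also have "\<dots> = (\<Sum>m\<in>UNIV. lam m * (\<Sum>k\<in>UNIV. Einv m k * cartan k j))"
    by (simp add: sum_distrib_left)
  also have "\<dots> = lam j" by (simp add: EC)
  finally show ?thesis by simp
qed

lemma rc_inj: "(\<And>k. rc a k = rc b k) \<Longrightarrow> a = b"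
  by (rule ext, subst expand, subst (2) expand) simp

lemma rc_eq_iff: "a = b \<longleftrightarrow> (\<forall>k. rc a k = rc b k)"
  using rc_inj by auto

definition pr :: "weight \<Rightarrow> weight \<Rightarrow> int" where
  "pr lam bet = (\<Sum>k\<in>UNIV. rc bet k * lam k)"

lemma pr_alpha_right[simp]: "pr lam (alpha i) = lam i"
  by (simp add: pr_def rc_alpha)

lemma pr_alpha_left[simp]: "pr (alpha i) mu = mu i"
  by (simp add: pr_def alpha_def cartan_sym[of i] expand[of mu i])

lemma pr_add1: "pr (a + b) c = pr a c + pr b c"
  by (simp add: pr_def algebra_simps sum.distrib)
lemma pr_add2: "pr c (a + b) = pr c a + pr c b"
  by (simp add: pr_def algebra_simps sum.distrib)
lemma pr_diff1: "pr (a - b) c = pr a c - pr b c"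
  by (simp add: pr_def algebra_simps sum_subtractf)
lemma pr_diff2: "pr c (a - b) = pr c a - pr c b"
  by (simp add: pr_def algebra_simps sum_subtractf)
lemma pr_smul1: "pr (smul x a) c = x * pr a c"
  by (simp add: pr_def smul_def sum_distrib_left algebra_simps)
lemma pr_smul2: "pr c (smul x a) = x * pr c a"
  by (simp add: pr_def sum_distrib_left algebra_simps)
lemma pr_uminus1: "pr (- a) c = - pr a c"
  by (simp add: pr_def sum_negf)
lemma pr_uminus2: "pr c (- a) = - pr c a"
  by (simp add: pr_def sum_negf)

lemma sref_eq: "sref i lam = lam - smul (lam i) (alpha i)"
  by (simp add: sref_def smul_def alpha_def fun_eq_iff)

lemma smul_alpha_i: "smul c (alpha i) i = 2 * c"
  by (simp add: smul_def alpha_def)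

lemma pr_sref: "pr (sref i a) (sref i b) = pr a b"
  by (simp add: sref_eq pr_diff1 pr_diff2 pr_smul1 pr_smul2 smul_alpha_i algebra_simps)

lemma sref_add: "sref i (a + b) = sref i a + sref i b"
  by (simp add: sref_def fun_eq_iff algebra_simps)
lemma sref_diff: "sref i (a - b) = sref i a - sref i b"
  by (simp add: sref_def fun_eq_iff algebra_simps)
lemma sref_uminus: "sref i (- a) = - sref i a"
  by (simp add: sref_def fun_eq_iff algebra_simps)
lemma sref_smul: "sref i (smul c a) = smul c (sref i a)"
  by (simp add: sref_def smul_def fun_eq_iff algebra_simps)
lemma sref_zero: "sref i 0 = 0"
  by (simp add: sref_def fun_eq_iff)
lemma sref_sref[simp]: "sref i (sref i a) = a"
  by (simp add: sref_def fun_eq_iff algebra_simps)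
lemma sref_alpha: "sref i (alpha i) = - alpha i"
  by (simp add: sref_def alpha_def fun_eq_iff)
lemma rc_sref: "rc (sref i a) k = rc a k - (if i = k then a i else 0)"
  by (simp add: sref_eq rc_alpha)


section \<open>The root system, computationally\<close>

definition PRH :: "int list list list" where
  "PRH = [[],
  [[0,0,0,0,0,0,0,1], [0,0,0,0,0,0,1,0], [0,0,0,0,0,1,0,0], [0,0,0,0,1,0,0,0], [0,0,0,1,0,0,0,0], [0,0,1,0,0,0,0,0], [0,1,0,0,0,0,0,0], [1,0,0,0,0,0,0,0]],
  [[0,0,0,0,0,0,1,1], [0,0,0,0,0,1,1,0], [0,0,0,0,1,1,0,0], [0,0,0,1,1,0,0,0], [0,0,1,1,0,0,0,0], [0,1,0,1,0,0,0,0], [1,0,1,0,0,0,0,0]],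
  [[0,0,0,0,0,1,1,1], [0,0,0,0,1,1,1,0], [0,0,0,1,1,1,0,0], [0,0,1,1,1,0,0,0], [0,1,0,1,1,0,0,0], [0,1,1,1,0,0,0,0], [1,0,1,1,0,0,0,0]],
  [[0,0,0,0,1,1,1,1], [0,0,0,1,1,1,1,0], [0,0,1,1,1,1,0,0], [0,1,0,1,1,1,0,0], [0,1,1,1,1,0,0,0], [1,0,1,1,1,0,0,0], [1,1,1,1,0,0,0,0]],
  [[0,0,0,1,1,1,1,1], [0,0,1,1,1,1,1,0], [0,1,0,1,1,1,1,0], [0,1,1,1,1,1,0,0], [0,1,1,2,1,0,0,0], [1,0,1,1,1,1,0,0], [1,1,1,1,1,0,0,0]],
  [[0,0,1,1,1,1,1,1], [0,1,0,1,1,1,1,1], [0,1,1,1,1,1,1,0], [0,1,1,2,1,1,0,0], [1,0,1,1,1,1,1,0], [1,1,1,1,1,1,0,0], [1,1,1,2,1,0,0,0]],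
  [[0,1,1,1,1,1,1,1], [0,1,1,2,1,1,1,0], [0,1,1,2,2,1,0,0], [1,0,1,1,1,1,1,1], [1,1,1,1,1,1,1,0], [1,1,1,2,1,1,0,0], [1,1,2,2,1,0,0,0]],
  [[0,1,1,2,1,1,1,1], [0,1,1,2,2,1,1,0], [1,1,1,1,1,1,1,1], [1,1,1,2,1,1,1,0], [1,1,1,2,2,1,0,0], [1,1,2,2,1,1,0,0]],
  [[0,1,1,2,2,1,1,1], [0,1,1,2,2,2,1,0], [1,1,1,2,1,1,1,1], [1,1,1,2,2,1,1,0], [1,1,2,2,1,1,1,0], [1,1,2,2,2,1,0,0]],
  [[0,1,1,2,2,2,1,1], [1,1,1,2,2,1,1,1], [1,1,1,2,2,2,1,0], [1,1,2,2,1,1,1,1], [1,1,2,2,2,1,1,0], [1,1,2,3,2,1,0,0]],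
  [[0,1,1,2,2,2,2,1], [1,1,1,2,2,2,1,1], [1,1,2,2,2,1,1,1], [1,1,2,2,2,2,1,0], [1,1,2,3,2,1,1,0], [1,2,2,3,2,1,0,0]],
  [[1,1,1,2,2,2,2,1], [1,1,2,2,2,2,1,1], [1,1,2,3,2,1,1,1], [1,1,2,3,2,2,1,0], [1,2,2,3,2,1,1,0]],
  [[1,1,2,2,2,2,2,1], [1,1,2,3,2,2,1,1], [1,1,2,3,3,2,1,0], [1,2,2,3,2,1,1,1], [1,2,2,3,2,2,1,0]],
  [[1,1,2,3,2,2,2,1], [1,1,2,3,3,2,1,1], [1,2,2,3,2,2,1,1], [1,2,2,3,3,2,1,0]],
  [[1,1,2,3,3,2,2,1], [1,2,2,3,2,2,2,1], [1,2,2,3,3,2,1,1], [1,2,2,4,3,2,1,0]],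
  [[1,1,2,3,3,3,2,1], [1,2,2,3,3,2,2,1], [1,2,2,4,3,2,1,1], [1,2,3,4,3,2,1,0]],
  [[1,2,2,3,3,3,2,1], [1,2,2,4,3,2,2,1], [1,2,3,4,3,2,1,1], [2,2,3,4,3,2,1,0]],
  [[1,2,2,4,3,3,2,1], [1,2,3,4,3,2,2,1], [2,2,3,4,3,2,1,1]],
  [[1,2,2,4,4,3,2,1], [1,2,3,4,3,3,2,1], [2,2,3,4,3,2,2,1]],
  [[1,2,3,4,4,3,2,1], [2,2,3,4,3,3,2,1]],
  [[1,2,3,5,4,3,2,1], [2,2,3,4,4,3,2,1]],
  [[1,3,3,5,4,3,2,1], [2,2,3,5,4,3,2,1]],
  [[2,2,4,5,4,3,2,1], [2,3,3,5,4,3,2,1]],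
  [[2,3,4,5,4,3,2,1]],
  [[2,3,4,6,4,3,2,1]],
  [[2,3,4,6,5,3,2,1]],
  [[2,3,4,6,5,4,2,1]],
  [[2,3,4,6,5,4,3,1]],
  [[2,3,4,6,5,4,3,2]]]"

definition PRL :: "int list list" where
  "PRL = concat PRH"

definition pairL :: "nat \<Rightarrow> int list \<Rightarrow> int" where
  "pairL i c = sum_list (map (\<lambda>k. c!k * Cn k i) [0..<8])"

definition reflL :: "nat \<Rightarrow> int list \<Rightarrow> int list" where
  "reflL i c = c[i := c!i - pairL i c]"

definition inPR :: "int list \<Rightarrow> bool" where
  "inPR c = (nat (sum_list c) < length PRH \<and> c \<in> set (PRH ! nat (sum_list c)))"

definition unitL :: "nat \<Rightarrow> int list" where
  "unitL i = map (\<lambda>n. if n = i then 1 else 0) [0..<8]"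

definition chk :: "nat \<Rightarrow> int list \<Rightarrow> bool" where
  "chk i c = (if pairL i c = 0 then True else if c = unitL i then reflL i c = map uminus c else inPR (reflL i c))"

lemma K1_0: "list_all (chk 0) PRL" by code_simp
lemma K1_1: "list_all (chk 1) PRL" by code_simp
lemma K1_2: "list_all (chk 2) PRL" by code_simp
lemma K1_3: "list_all (chk 3) PRL" by code_simp
lemma K1_4: "list_all (chk 4) PRL" by code_simp
lemma K1_5: "list_all (chk 5) PRL" by code_simp
lemma K1_6: "list_all (chk 6) PRL" by code_simp
lemma K1_7: "list_all (chk 7) PRL" by code_simp

lemma K2: "list_all (\<lambda>i. unitL i \<in> set PRL) [0..<8]" by code_simp

lemma K3: "list_all (\<lambda>c. length c = 8 \<and> list_all (\<lambda>x. x \<ge> 0) c \<and> c \<noteq> replicate 8 0) PRL" by code_simp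


definition rcL :: "weight \<Rightarrow> int list" where
  "rcL lam = map (\<lambda>n. rc lam (of_nat n)) [0..<8]"

lemma length_rcL[simp]: "length (rcL lam) = 8"
  by (simp add: rcL_def)

lemma rcL_nth_nat: "n < 8 \<Longrightarrow> rcL lam ! n = rc lam (of_nat n)"
  by (simp add: rcL_def)

lemma rcL_nth: "rcL lam ! idx k = rc lam k"
  using idx_lt[of k] by (simp add: rcL_nth_nat of_nat_idx)

lemma rcL_inj: "rcL a = rcL b \<Longrightarrow> a = b"
  by (rule rc_inj) (metis rcL_nth)

lemma inj_rcL: "inj rcL"
  using rcL_inj by (auto intro: injI)

lemma sum_lt8_UNIV: "(\<Sum>k<8. f (of_nat k :: 8)) = (\<Sum>k\<in>UNIV. f k)"
  by (simp add: sum8)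

lemma pairL_rcL: "pairL (idx i) (rcL lam) = lam i"
proof -
  have "pairL (idx i) (rcL lam) = (\<Sum>k<8. rcL lam ! k * Cn k (idx i))"
    by (simp add: pairL_def sum_list_upt8)
  also have "\<dots> = (\<Sum>k<8. rc lam (of_nat k) * cartan (of_nat k) i)"
    by (rule sum.cong) (auto simp: rcL_nth_nat cartan_Cn idx_of_nat)
  also have "\<dots> = (\<Sum>k\<in>UNIV. rc lam k * cartan k i)"
    by (rule sum_lt8_UNIV[where f="\<lambda>k. rc lam k * cartan k i"])
  also have "\<dots> = lam i" by (rule expand[symmetric])
  finally show ?thesis .
qed

lemma of_nat_eq_iff_idx: "n < 8 \<Longrightarrow> (i = (of_nat n :: 8)) \<longleftrightarrow> idx i = n"
  by (metis idx_of_nat of_nat_idx)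

lemma rcL_sref: "rcL (sref i lam) = reflL (idx i) (rcL lam)"
proof (rule nth_equalityI)
  show "length (rcL (sref i lam)) = length (reflL (idx i) (rcL lam))"
    by (simp add: reflL_def)
next
  fix n assume "n < length (rcL (sref i lam))"
  then have n: "n < 8" by simp
  have "rcL (sref i lam) ! n = rc lam (of_nat n) - (if i = of_nat n then lam i else 0)"
    using n by (simp add: rcL_nth_nat rc_sref)
  also have "\<dots> = reflL (idx i) (rcL lam) ! n"
    using n idx_lt[of i]
    by (auto simp: reflL_def pairL_rcL rcL_nth_nat of_nat_eq_iff_idx nth_list_update)
  finally show "rcL (sref i lam) ! n = reflL (idx i) (rcL lam) ! n" .
qed

lemma rcL_uminus: "rcL (- lam) = map uminus (rcL lam)"
  by (simp add: rcL_def)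

lemma rcL_alpha: "rcL (alpha i) = unitL (idx i)"
  by (simp add: rcL_def unitL_def rc_alpha of_nat_eq_iff_idx)

definition RS :: "weight set" where
  "RS = {lam. rcL lam \<in> set PRL \<or> rcL (- lam) \<in> set PRL}"

lemma chk_all: "c \<in> set PRL \<Longrightarrow> n < 8 \<Longrightarrow> chk n c"
proof -
  assume c: "c \<in> set PRL" and n: "n < 8"
  then have "n \<in> {0,1,2,3,4,5,6,7}" by auto
  then show ?thesis
    using c K1_0 K1_1 K1_2 K1_3 K1_4 K1_5 K1_6 K1_7 by (auto simp: list_all_iff)
qed

lemma inPR_PRL: "inPR c \<Longrightarrow> c \<in> set PRL"
  unfolding inPR_def PRL_def by (auto intro: nth_mem)

lemma RS_uminus: "lam \<in> RS \<Longrightarrow> - lam \<in> RS"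
  by (auto simp: RS_def)

lemma RS_pos_sref: "rcL lam \<in> set PRL \<Longrightarrow> sref i lam \<in> RS"
proof -
  assume c: "rcL lam \<in> set PRL"
  have ch: "chk (idx i) (rcL lam)" by (rule chk_all[OF c idx_lt])
  show ?thesis
  proof (cases "pairL (idx i) (rcL lam) = 0")
    case True
    then have "reflL (idx i) (rcL lam) = rcL lam" by (simp add: reflL_def)
    then show ?thesis using c by (simp add: RS_def rcL_sref)
  next
    case F1: False
    show ?thesis
    proof (cases "rcL lam = unitL (idx i)")
      case True
      then have "reflL (idx i) (rcL lam) = map uminus (rcL lam)"
        using ch F1 by (simp add: chk_def)
      then have "rcL (- sref i lam) = rcL lam"
        by (simp add: rcL_uminus rcL_sref comp_def)
      then show ?thesis using c by (simp add: RS_def)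
    next
      case False
      then have "inPR (reflL (idx i) (rcL lam))" using ch F1 by (simp add: chk_def)
      then show ?thesis by (simp add: RS_def rcL_sref inPR_PRL)
    qed
  qed
qed

lemma RS_sref: "lam \<in> RS \<Longrightarrow> sref i lam \<in> RS"
proof -
  assume "lam \<in> RS"
  then consider "rcL lam \<in> set PRL" | "rcL (- lam) \<in> set PRL" by (auto simp: RS_def)
  then show ?thesis
  proof cases
    case 1 then show ?thesis by (rule RS_pos_sref)
  next
    case 2
    then have "sref i (- lam) \<in> RS" by (rule RS_pos_sref)
    then have "- sref i (- lam) \<in> RS" by (rule RS_uminus)
    then show ?thesis by (simp add: sref_uminus)
  qed
qed

lemma alpha_RS: "alpha i \<in> RS"
  using K2 idx_lt[of i] by (simp add: RS_def rcL_alpha list_all_iff)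

lemma weyl_alpha_RS: "w \<in> weyl \<Longrightarrow> w (alpha i) \<in> RS"
  by (induction w rule: weyl.induct) (auto simp: alpha_RS RS_sref)

lemma roots_RS: "roots \<subseteq> RS"
  unfolding roots_def using weyl_alpha_RS by blast

lemma K3': "c \<in> set PRL \<Longrightarrow> length c = 8 \<and> (\<forall>x\<in>set c. x \<ge> 0) \<and> c \<noteq> replicate 8 0"
  using K3 by (auto simp: list_all_iff)

lemma RS_sign: "lam \<in> RS \<Longrightarrow> (\<forall>k. rc lam k \<ge> 0) \<or> (\<forall>k. rc lam k \<le> 0)"
proof -
  assume "lam \<in> RS"
  then consider "rcL lam \<in> set PRL" | "rcL (- lam) \<in> set PRL" by (auto simp: RS_def)
  then show ?thesis
  proof cases
    case 1
    have "rc lam k \<ge> 0" for k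
      using K3'[OF 1] nth_mem[of "idx k" "rcL lam"] idx_lt[of k] by (simp add: rcL_nth)
    then show ?thesis by blast
  next
    case 2
    have "rc (- lam) k \<ge> 0" for k
      using K3'[OF 2] nth_mem[of "idx k" "rcL (- lam)"] idx_lt[of k] unfolding rcL_nth by auto
    then show ?thesis by simp
  qed
qed

lemma rcL_zero: "rcL 0 = replicate 8 0"
  by (simp add: rcL_def list_eq_iff_nth_eq)

lemma RS_nonzero: "lam \<in> RS \<Longrightarrow> lam \<noteq> 0"
  using K3'[of "replicate 8 0"] by (auto simp: RS_def rcL_zero)

lemma finite_RS: "finite RS"
proof -
  have "RS \<subseteq> rcL -` set PRL \<union> uminus ` (rcL -` set PRL)"
  proof
    fix x assume "x \<in> RS"
    then consider "rcL x \<in> set PRL" | "rcL (- x) \<in> set PRL" by (auto simp: RS_def)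
    then show "x \<in> rcL -` set PRL \<union> uminus ` (rcL -` set PRL)"
    proof cases
      case 2 then have "- x \<in> rcL -` set PRL" by simp
      then have "- (- x) \<in> uminus ` (rcL -` set PRL)" by blast
      then show ?thesis by simp
    qed simp
  qed
  moreover have "finite (rcL -` set PRL)"
    by (rule finite_vimageI[OF _ inj_rcL]) simp
  ultimately show ?thesis by (meson finite_Un finite_imageI finite_subset)
qed

lemma finite_roots: "finite roots"
  using finite_subset[OF roots_RS finite_RS] .

lemma root_sign: "b \<in> roots \<Longrightarrow> (\<forall>k. rc b k \<ge> 0) \<or> (\<forall>k. rc b k \<le> 0)"
  using RS_sign roots_RS by blast

lemma root_nonzero: "b \<in> roots \<Longrightarrow> b \<noteq> 0"
  using RS_nonzero roots_RS by blast


section \<open>Weyl group\<close>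

fun word :: "8 list \<Rightarrow> weight \<Rightarrow> weight" where
  "word [] = id"
| "word (i # is) = sref i \<circ> word is"

lemma word_append: "word (is @ js) = word is \<circ> word js"
  by (induction "is") auto

lemma word_snoc: "word (is @ [j]) = word is \<circ> sref j"
  by (simp add: word_append)

lemma weyl_word: "w \<in> weyl \<longleftrightarrow> (\<exists>is. w = word is)"
proof
  assume "w \<in> weyl"
  then show "\<exists>is. w = word is"
  proof (induction rule: weyl.induct)
    case weyl_id then show ?case by (intro exI[of _ "[]"]) simp
  next
    case (weyl_step w i)
    then obtain "is" where "w = word is" by blast
    then show ?case by (intro exI[of _ "i # is"]) simp
  qed
next
  assume "\<exists>is. w = word is"
  then obtain "is" where w: "w = word is" by blast
  have "word is \<in> weyl"
  proof (induction "is")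
    case Nil then show ?case using weyl_id by (simp only: word.simps)
  next
    case (Cons i "is") then show ?case using weyl_step by (simp only: word.simps)
  qed
  then show "w \<in> weyl" using w by simp
qed

lemma word_in_weyl[simp]: "word is \<in> weyl"
  using weyl_word by blast

lemma sref_comp_sref[simp]: "sref i \<circ> sref i = id"
  by (simp add: fun_eq_iff)

lemma word_rev_inv_pt: "word (rev is) (word is x) = x"
  by (induction "is" arbitrary: x) (simp_all add: word_snoc)

lemma word_rev_inv: "word (rev is) \<circ> word is = id"
  by (simp add: fun_eq_iff word_rev_inv_pt)

lemma word_inv_rev: "word is \<circ> word (rev is) = id"
  using word_rev_inv[of "rev is"] by simp

lemma weyl_comp: "v \<in> weyl \<Longrightarrow> w \<in> weyl \<Longrightarrow> v \<circ> w \<in> weyl"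
  by (auto simp: weyl_word word_append[symmetric])

lemma weyl_sref_right: "w \<in> weyl \<Longrightarrow> w \<circ> sref i \<in> weyl"
  by (auto simp: weyl_word word_snoc[symmetric])

lemma weyl_sref_left: "w \<in> weyl \<Longrightarrow> sref i \<circ> w \<in> weyl"
  by (rule weyl_step)

lemma weyl_inv: "w \<in> weyl \<Longrightarrow> \<exists>v\<in>weyl. v \<circ> w = id \<and> w \<circ> v = id"
proof -
  assume "w \<in> weyl"
  then obtain "is" where "w = word is" using weyl_word by blast
  then show ?thesis using word_rev_inv[of "is"] word_inv_rev[of "is"] word_in_weyl[of "rev is"] by blast
qed

lemma weyl_inj: "w \<in> weyl \<Longrightarrow> inj w"
proof -
  assume "w \<in> weyl"
  then obtain v where "v \<circ> w = id" using weyl_inv by blast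
  then have "v (w x) = x" for x by (simp add: fun_eq_iff)
  then show "inj w" by (metis injI)
qed

lemma weyl_add: "w \<in> weyl \<Longrightarrow> w (a + b) = w a + w b"
  by (induction arbitrary: a b rule: weyl.induct) (auto simp: sref_add)
lemma weyl_diff: "w \<in> weyl \<Longrightarrow> w (a - b) = w a - w b"
  by (induction arbitrary: a b rule: weyl.induct) (auto simp: sref_diff)
lemma weyl_uminus: "w \<in> weyl \<Longrightarrow> w (- a) = - w a"
  by (induction arbitrary: a rule: weyl.induct) (auto simp: sref_uminus)
lemma weyl_smul: "w \<in> weyl \<Longrightarrow> w (smul c a) = smul c (w a)"
  by (induction arbitrary: a rule: weyl.induct) (auto simp: sref_smul)
lemma weyl_zero: "w \<in> weyl \<Longrightarrow> w 0 = 0"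
  by (induction rule: weyl.induct) (auto simp: sref_def)
lemma weyl_pr: "w \<in> weyl \<Longrightarrow> pr (w a) (w b) = pr a b"
  by (induction arbitrary: a b rule: weyl.induct) (auto simp: pr_sref)
lemma weyl_sum: "w \<in> weyl \<Longrightarrow> w (\<Sum>x\<in>A. f x) = (\<Sum>x\<in>A. w (f x))"
  by (induction A rule: infinite_finite_induct) (auto simp: weyl_zero weyl_add)

lemma lam_expand: "lam = (\<Sum>k\<in>UNIV. smul (rc lam k) (alpha k))"
  by (rule ext) (simp add: sum_fun_apply smul_def alpha_def expand[symmetric])

lemma alpha_root: "alpha i \<in> roots"
  unfolding roots_def by (auto intro!: exI[of _ id] weyl_id)

lemma roots_stable: "w \<in> weyl \<Longrightarrow> b \<in> roots \<Longrightarrow> w b \<in> roots"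
proof -
  assume w: "w \<in> weyl" and "b \<in> roots"
  then obtain v i where v: "v \<in> weyl" "b = v (alpha i)" unfolding roots_def by blast
  then have "w b = (w \<circ> v) (alpha i)" "w \<circ> v \<in> weyl" using weyl_comp[OF w v(1)] by auto
  then show ?thesis unfolding roots_def by blast
qed

lemma root_uminus: "b \<in> roots \<Longrightarrow> - b \<in> roots"
proof -
  assume "b \<in> roots"
  then obtain v i where v: "v \<in> weyl" "b = v (alpha i)" unfolding roots_def by blast
  then have "- b = (v \<circ> sref i) (alpha i)" by (simp add: sref_alpha weyl_uminus fun_eq_iff)
  then show ?thesis unfolding roots_def using weyl_sref_right[OF v(1)] by blast
qed

lemma pr_alpha_alpha: "pr (alpha i) (alpha i) = 2"
  by (simp only: pr_alpha_left) (simp add: alpha_def)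

lemma root_norm: "b \<in> roots \<Longrightarrow> pr b b = 2"
  unfolding roots_def using weyl_pr pr_alpha_alpha by auto

abbreviation P where "P \<equiv> pos_roots"

lemma pos_iff: "b \<in> P \<longleftrightarrow> b \<in> roots \<and> (\<forall>k. rc b k \<ge> 0)"
  by (simp add: pos_roots_def rootcoef_rc)

lemma finite_P: "finite P"
  using finite_roots by (auto simp: pos_roots_def)

lemma P_roots: "b \<in> P \<Longrightarrow> b \<in> roots"
  by (simp add: pos_iff)

lemma root_cases: "b \<in> roots \<Longrightarrow> b \<in> P \<or> - b \<in> P"
  using root_sign[of b] root_uminus[of b] by (auto simp: pos_iff)

lemma pos_neg: "b \<in> P \<Longrightarrow> - b \<notin> P"
proof
  assume "b \<in> P" "- b \<in> P"
  then have "rc b k = 0" for k by (auto simp: pos_iff) (metis neg_0_le_iff_le order_antisym)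
  then have "b = 0" by (simp add: rc_eq_iff)
  then show False using \<open>b \<in> P\<close> root_nonzero by (auto simp: pos_iff)
qed

lemma root_not_pos: "b \<in> roots \<Longrightarrow> b \<notin> P \<longleftrightarrow> - b \<in> P"
  using root_cases pos_neg by (metis minus_minus)

lemma alpha_pos: "alpha i \<in> P"
  by (simp add: pos_iff alpha_root rc_alpha)

lemma sref_root: "b \<in> roots \<Longrightarrow> sref i b \<in> roots"
  using roots_stable[of "sref i"] weyl_sref_left[OF weyl_id] by simp

lemma W4: "b \<in> P \<Longrightarrow> b \<noteq> alpha i \<Longrightarrow> sref i b \<in> P"
proof -
  assume bP: "b \<in> P" and ne: "b \<noteq> alpha i"
  have root: "sref i b \<in> roots" using bP sref_root P_roots by blast
  show ?thesis
  proof (cases "\<exists>k. k \<noteq> i \<and> rc b k > 0")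
    case True
    then obtain k where k: "k \<noteq> i" "rc b k > 0" by blast
    then have "rc (sref i b) k > 0" by (simp add: rc_sref)
    then have "\<not> (\<forall>k. rc (sref i b) k \<le> 0)" by (meson not_le)
    then have "\<forall>k. rc (sref i b) k \<ge> 0" using root_sign[OF root] by blast
    then show ?thesis using root by (simp add: pos_iff)
  next
    case False
    have z: "k \<noteq> i \<Longrightarrow> rc b k = 0" for k
    proof -
      assume "k \<noteq> i"
      then have "\<not> rc b k > 0" using False by blast
      moreover have "rc b k \<ge> 0" using bP by (simp add: pos_iff)
      ultimately show "rc b k = 0" by simp
    qed
    have beq: "b = smul (rc b i) (alpha i)"
      by (rule rc_inj) (auto simp: rc_alpha z)
    have "pr b b = rc b i * rc b i * 2"
      by (subst (1 2) beq) (simp add: pr_smul1 pr_smul2 pr_alpha_alpha smul_alpha_i)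
    then have "rc b i * rc b i = 1" using root_norm[OF P_roots[OF bP]] by simp
    moreover have "rc b i \<ge> 0" using bP by (simp add: pos_iff)
    ultimately have "rc b i = 1"
      by (auto simp: zmult_eq_1_iff)
    then have "b = alpha i" using beq by (simp add: smul_def fun_eq_iff)
    then show ?thesis using ne by simp
  qed
qed

definition sbeta :: "weight \<Rightarrow> weight \<Rightarrow> weight" where
  "sbeta b lam = lam - smul (pr lam b) b"

lemma sbeta_alpha: "sbeta (alpha i) = sref i"
  by (simp add: fun_eq_iff sbeta_def sref_eq)

lemma conj_refl: "w \<in> weyl \<Longrightarrow> w \<circ> sbeta b = sbeta (w b) \<circ> w"
  by (simp add: fun_eq_iff sbeta_def weyl_diff weyl_smul weyl_pr)

lemma deletion: "word is (alpha j) \<notin> P \<Longrightarrow> \<exists>ks. length ks + 1 = length is \<and> word is \<circ> sref j = word ks"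
proof (induction "is")
  case Nil
  then show ?case using alpha_pos by simp
next
  case (Cons i is0)
  show ?case
  proof (cases "word is0 (alpha j) \<in> P")
    case False
    then obtain ks where ks: "length ks + 1 = length is0" "word is0 \<circ> sref j = word ks"
      using Cons.IH by blast
    have pt: "word is0 (sref j x) = word ks x" for x using ks(2) by (metis comp_apply)
    have e: "word (i # is0) \<circ> sref j = word (i # ks)"
      by (rule ext) (simp add: pt)
    have l: "length (i # ks) + 1 = length (i # is0)" using ks(1) by simp
    show ?thesis using e l by blast
  next
    case True
    have "sref i (word is0 (alpha j)) \<notin> P" using Cons.prems by simp
    then have g: "word is0 (alpha j) = alpha i" using W4 True by blast
    have "word is0 \<circ> sref j = sref i \<circ> word is0"
      using conj_refl[of "word is0" "alpha j"] by (simp add: sbeta_alpha g)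
    then have "word (i # is0) \<circ> sref j = word is0 \<circ> sref j \<circ> sref j"
      by (simp add: comp_assoc)
    also have "\<dots> = word is0" by (simp add: comp_assoc)
    finally have e: "word (i # is0) \<circ> sref j = word is0" .
    have l: "length is0 + 1 = length (i # is0)" by simp
    show ?thesis using e l by blast
  qed
qed

definition reduced :: "8 list \<Rightarrow> bool" where
  "reduced is \<longleftrightarrow> (\<forall>js. word js = word is \<longrightarrow> length is \<le> length js)"

lemma exists_reduced: "\<exists>js. word js = word is \<and> reduced js"
proof -
  let ?S = "{n. \<exists>js. word js = word is \<and> length js = n}"
  have "length is \<in> ?S" by blast
  define m where "m = Least (\<lambda>n. n \<in> ?S)"
  have "m \<in> ?S" unfolding m_def by (rule LeastI[of _ "length is"]) (blast)
  then obtain js where js: "word js = word is" "length js = m" by blast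
  have "reduced js"
    unfolding reduced_def
  proof (intro allI impI)
    fix ks assume "word ks = word js"
    then have "length ks \<in> ?S" using js by auto
    then have "m \<le> length ks" unfolding m_def by (rule Least_le)
    then show "length js \<le> length ks" using js by simp
  qed
  then show ?thesis using js by blast
qed

lemma reduced_snoc: "reduced (is @ [j]) \<Longrightarrow> reduced is \<and> word is (alpha j) \<in> P"
proof
  assume r: "reduced (is @ [j])"
  show "reduced is"
    unfolding reduced_def
  proof (intro allI impI)
    fix js assume "word js = word is"
    then have "word (js @ [j]) = word (is @ [j])" by (simp add: word_snoc)
    then have "length (is @ [j]) \<le> length (js @ [j])" using r unfolding reduced_def by blast
    then show "length is \<le> length js" by simp
  qed
  show "word is (alpha j) \<in> P"
  proof (rule ccontr)
    assume "word is (alpha j) \<notin> P"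
    then obtain ks where ks: "length ks + 1 = length is" "word is \<circ> sref j = word ks"
      using deletion by blast
    then have "word ks = word (is @ [j])" by (simp add: word_snoc)
    then have "length (is @ [j]) \<le> length ks" using r unfolding reduced_def by blast
    then show False using ks by simp
  qed
qed

lemma no_inv_id: "w \<in> weyl \<Longrightarrow> (\<forall>b\<in>P. w b \<in> P) \<Longrightarrow> w = id"
proof -
  assume w: "w \<in> weyl" and pres: "\<forall>b\<in>P. w b \<in> P"
  obtain is0 where "w = word is0" using w weyl_word by blast
  then obtain "is" where is_: "w = word is" "reduced is" using exists_reduced by metis
  show "w = id"
  proof (cases "is" rule: rev_cases)
    case Nil then show ?thesis using is_ by simp
  next
    case (snoc js j)
    then have p: "word js (alpha j) \<in> P" using reduced_snoc is_ by blast
    have "w (alpha j) = - word js (alpha j)"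
      using is_ snoc by (simp add: word_snoc sref_alpha weyl_uminus fun_eq_iff)
    then have "w (alpha j) \<notin> P" using pos_neg[OF p] by simp
    then show ?thesis using pres alpha_pos by blast
  qed
qed

definition sdom :: "weight \<Rightarrow> bool" where "sdom mu \<longleftrightarrow> (\<forall>i. mu i > 0)"
definition dom :: "weight \<Rightarrow> bool" where "dom mu \<longleftrightarrow> (\<forall>i. mu i \<ge> 0)"
definition le :: "weight \<Rightarrow> weight \<Rightarrow> bool" where "le a b \<longleftrightarrow> (\<forall>k. rc a k \<le> rc b k)"

lemma pr_pos: "sdom mu \<Longrightarrow> b \<in> P \<Longrightarrow> pr mu b > 0"
proof -
  assume mu: "sdom mu" and b: "b \<in> P"
  have nn: "\<forall>k. rc b k \<ge> 0" using b by (simp add: pos_iff)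
  have "b \<noteq> 0" using b root_nonzero P_roots by blast
  then obtain k where k: "rc b k \<noteq> 0" using rc_inj[of b 0] by auto
  then have "rc b k * mu k > 0" using nn mu by (simp add: sdom_def order_neq_le_trans)
  moreover have "\<forall>k. rc b k * mu k \<ge> 0" using nn mu by (simp add: sdom_def less_imp_le)
  ultimately have "(\<Sum>k\<in>UNIV. rc b k * mu k) > 0"
    by (intro sum_pos2[where i=k]) auto
  then show ?thesis by (simp add: pr_def)
qed

lemma simple_trans: "sdom mu \<Longrightarrow> w \<in> weyl \<Longrightarrow> w mu = mu \<Longrightarrow> w = id"
proof -
  assume mu: "sdom mu" and w: "w \<in> weyl" and fix_: "w mu = mu"
  have "w b \<in> P" if b: "b \<in> P" for b
  proof (rule ccontr)
    assume "w b \<notin> P"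
    then have nb: "- w b \<in> P" using root_not_pos roots_stable[OF w P_roots[OF b]] by blast
    have "pr mu (w b) = pr mu b" using weyl_pr[OF w, of mu b] fix_ by simp
    moreover have "pr mu (- w b) > 0" by (rule pr_pos[OF mu nb])
    ultimately show False using pr_pos[OF mu b] by (simp add: pr_uminus2)
  qed
  then show ?thesis using no_inv_id[OF w] by blast
qed

lemma weyl_eq_sdom: "sdom mu \<Longrightarrow> v \<in> weyl \<Longrightarrow> w \<in> weyl \<Longrightarrow> v mu = w mu \<Longrightarrow> v = w"
proof -
  assume mu: "sdom mu" and v: "v \<in> weyl" and w: "w \<in> weyl" and eq: "v mu = w mu"
  obtain "is" where wi: "w = word is" using w weyl_word by blast
  let ?u = "word (rev is) \<circ> v"
  have "?u \<in> weyl" using v by (simp add: weyl_comp)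
  moreover have "?u mu = mu" using eq wi by (simp add: word_rev_inv_pt)
  ultimately have "?u = id" using simple_trans mu by blast
  then have "word is \<circ> ?u = word is" by simp
  then show "v = w" using wi word_inv_rev[of "is"] by (simp add: comp_assoc[symmetric])
qed

lemma dominance_reduced: "dom lam \<Longrightarrow> reduced is \<Longrightarrow> le (word is lam) lam"
proof (induction "is" rule: rev_induct)
  case Nil then show ?case by (simp add: le_def)
next
  case (snoc j "is")
  then have r: "reduced is" and p: "word is (alpha j) \<in> P" using reduced_snoc by blast+
  have "word (is @ [j]) lam = word is lam - smul (lam j) (word is (alpha j))"
    by (simp add: word_snoc sref_eq weyl_diff weyl_smul fun_eq_iff)
  moreover have "lam j \<ge> 0" using snoc.prems by (simp add: dom_def)
  moreover have "\<forall>k. rc (word is (alpha j)) k \<ge> 0" using p by (simp add: pos_iff)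
  ultimately have "rc (word (is @ [j]) lam) k \<le> rc (word is lam) k" for k
    by (simp add: mult_nonneg_nonneg)
  moreover have "rc (word is lam) k \<le> rc lam k" for k
    using snoc.IH[OF snoc.prems(1) r] by (simp add: le_def)
  ultimately show ?case unfolding le_def using order_trans by blast
qed

lemma dominance: "dom lam \<Longrightarrow> w \<in> weyl \<Longrightarrow> le (w lam) lam"
proof -
  assume d: "dom lam" and "w \<in> weyl"
  then obtain is0 where "w = word is0" using weyl_word by blast
  moreover obtain "is" where eq: "word is = word is0" and r: "reduced is" using exists_reduced by blast
  moreover have "le (word is lam) lam" by (rule dominance_reduced[OF d r])
  ultimately show ?thesis by simp
qed


definition ninv :: "(weight \<Rightarrow> weight) \<Rightarrow> nat" where
  "ninv w = card {b \<in> P. w b \<notin> P}"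

lemma sref_eq_alpha_iff: "sref j x = alpha j \<longleftrightarrow> x = - alpha j"
  by (metis sref_alpha sref_sref sref_uminus minus_minus)

lemma wsign_ninv: "wsign w = (-1) ^ ninv w"
  by (simp add: wsign_def ninv_def)

lemma ninv_flip: "w \<in> weyl \<Longrightarrow> odd (ninv (w \<circ> sref j) + ninv w)"
proof -
  assume w: "w \<in> weyl"
  define A where "A = {b \<in> P - {alpha j}. w b \<notin> P}"
  have finA: "finite A" unfolding A_def using finite_P by simp
  have aA: "alpha j \<notin> A" unfolding A_def by simp
  have wa: "w (alpha j) \<in> roots" using roots_stable[OF w alpha_root] .
  have yne: "sref j y \<noteq> alpha j" if yA: "y \<in> A" for y
  proof -
    have "y \<in> P" using yA unfolding A_def by simp
    then have "y \<noteq> - alpha j" using pos_neg[OF alpha_pos] by auto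
    then show ?thesis by (simp only: sref_eq_alpha_iff) simp
  qed
  have aSA: "alpha j \<notin> sref j ` A"
  proof
    assume "alpha j \<in> sref j ` A"
    then obtain y where y: "y \<in> A" and e: "alpha j = sref j y" by (rule imageE)
    from yne[OF y] e show False by simp
  qed
  have s1: "{b \<in> P. w b \<notin> P} = A \<union> (if w (alpha j) \<notin> P then {alpha j} else {})"
    unfolding A_def using alpha_pos[of j] by (cases "w (alpha j) \<in> P") auto
  have c1: "ninv w = card A + (if w (alpha j) \<notin> P then 1 else 0)"
    unfolding ninv_def s1 using finA aA by (cases "w (alpha j) \<in> P") auto
  have s2: "{b \<in> P. (w \<circ> sref j) b \<notin> P} = sref j ` A \<union> (if w (alpha j) \<in> P then {alpha j} else {})"
  proof (rule set_eqI)
    fix x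
    show "x \<in> {b \<in> P. (w \<circ> sref j) b \<notin> P} \<longleftrightarrow> x \<in> sref j ` A \<union> (if w (alpha j) \<in> P then {alpha j} else {})"
    proof (cases "x = alpha j")
      case True
      have "w (sref j (alpha j)) = - w (alpha j)" by (simp add: sref_alpha weyl_uminus[OF w])
      moreover have "- w (alpha j) \<notin> P \<longleftrightarrow> w (alpha j) \<in> P"
        using root_not_pos[OF root_uminus[OF wa]] by simp
      ultimately show ?thesis using True aSA alpha_pos[of j] by (cases "w (alpha j) \<in> P") auto
    next
      case False
      have i1: "x \<in> sref j ` A \<longleftrightarrow> sref j x \<in> A"
      proof
        assume "x \<in> sref j ` A"
        then obtain y where "y \<in> A" and "x = sref j y" by (rule imageE)
        then show "sref j x \<in> A" by simp
      next
        assume "sref j x \<in> A"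
        then have "sref j (sref j x) \<in> sref j ` A" by (rule imageI)
        then show "x \<in> sref j ` A" by simp
      qed
      have i2: "x \<in> P \<longleftrightarrow> sref j x \<in> P - {alpha j}"
      proof
        assume xP: "x \<in> P"
        then have "sref j x \<in> P" using W4 False by blast
        moreover have "x \<noteq> - alpha j" using xP pos_neg[OF alpha_pos] by auto
        then have "sref j x \<noteq> alpha j" by (simp only: sref_eq_alpha_iff) simp
        ultimately show "sref j x \<in> P - {alpha j}" by simp
      next
        assume "sref j x \<in> P - {alpha j}"
        then have "sref j (sref j x) \<in> P" using W4 by blast
        then show "x \<in> P" by simp
      qed
      have "x \<in> {b \<in> P. (w \<circ> sref j) b \<notin> P} \<longleftrightarrow> sref j x \<in> A"
        unfolding A_def using i2 by simp
      then show ?thesis using False i1 by simp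
    qed
  qed
  have "card (sref j ` A) = card A"
    by (rule card_image, rule inj_onI, drule arg_cong[where f="sref j"], simp)
  then have c2: "ninv (w \<circ> sref j) = card A + (if w (alpha j) \<in> P then 1 else 0)"
    unfolding ninv_def s2 using finA aSA by (cases "w (alpha j) \<in> P") auto
  show ?thesis using c1 c2 by (cases "w (alpha j) \<in> P") auto
qed
lemma wsign_snoc: "wsign (word (is @ [j])) = - wsign (word is)"
proof -
  have o: "odd (ninv (word is \<circ> sref j) + ninv (word is))" by (rule ninv_flip) simp
  then have "even (ninv (word is \<circ> sref j)) \<longleftrightarrow> odd (ninv (word is))" by auto
  then have "(-1::int) ^ ninv (word is \<circ> sref j) = - ((-1) ^ ninv (word is))"
    by (cases "even (ninv (word is))") (simp_all add: minus_one_power_iff)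
  then show ?thesis by (simp add: wsign_ninv word_snoc)
qed

lemma wsign_word: "wsign (word is) = (-1) ^ length is"
proof (induction "is" rule: rev_induct)
  case Nil
  have "ninv (word []) = 0" by (simp add: ninv_def)
  then show ?case by (simp only: wsign_ninv) simp
next
  case (snoc j "is")
  then show ?case by (simp add: wsign_snoc)
qed

lemma wsign_id: "wsign id = 1"
  using wsign_word[of "[]"] by simp

lemma wsign_sref_left: "w \<in> weyl \<Longrightarrow> wsign (sref i \<circ> w) = - wsign w"
proof -
  assume "w \<in> weyl"
  then obtain "is" where w: "w = word is" using weyl_word by blast
  then have "sref i \<circ> w = word (i # is)" by simp
  then show ?thesis using w by (simp only: wsign_word) simp
qed

lemma weyl_expand: "w \<in> weyl \<Longrightarrow> w lam = (\<Sum>k\<in>UNIV. smul (rc lam k) (w (alpha k)))"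
proof -
  assume w: "w \<in> weyl"
  have "w lam = w (\<Sum>k\<in>UNIV. smul (rc lam k) (alpha k))" by (subst lam_expand) (rule refl)
  also have "\<dots> = (\<Sum>k\<in>UNIV. smul (rc lam k) (w (alpha k)))" by (simp add: weyl_sum[OF w] weyl_smul[OF w])
  finally show ?thesis .
qed

lemma finite_weyl: "finite weyl"
proof -
  let ?f = "\<lambda>w. map (\<lambda>n. w (alpha (of_nat n))) [0..<8]"
  have inj: "inj_on ?f weyl"
  proof (rule inj_onI)
    fix v w assume v: "v \<in> weyl" and w: "w \<in> weyl" and eq: "?f v = ?f w"
    have ai: "v (alpha i) = w (alpha i)" for i
    proof -
      have "?f v ! idx i = ?f w ! idx i" using eq by (simp only:)
      then show ?thesis using idx_lt[of i] by (simp add: of_nat_idx)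
    qed
    have "v lam = w lam" for lam
      by (subst weyl_expand[OF v], subst weyl_expand[OF w]) (simp only: ai)
    then show "v = w" by (rule ext)
  qed
  have "?f ` weyl \<subseteq> {xs. set xs \<subseteq> roots \<and> length xs = 8}"
    using roots_stable[OF _ alpha_root] by auto
  moreover have "finite {xs. set xs \<subseteq> roots \<and> length xs = 8}"
    by (rule finite_lists_length_eq[OF finite_roots])
  ultimately have "finite (?f ` weyl)" by (rule finite_subset)
  then show ?thesis using inj by (rule finite_imageD)
qed

section \<open>Sum of positive roots\<close>

lemma sref_sum: "sref i (\<Sum>x\<in>A. f x) = (\<Sum>x\<in>A. sref i (f x))"
  using weyl_sum[OF weyl_sref_left[OF weyl_id, of i]] by simp

lemma sum_pos_roots: "(\<Sum>b\<in>P. b) = (\<lambda>_. 2)"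
proof (rule ext)
  fix i
  let ?s = "\<Sum>b\<in>P. b"
  let ?Q = "P - {alpha i}"
  have img: "sref i ` ?Q = ?Q"
  proof
    show "sref i ` ?Q \<subseteq> ?Q"
      using W4 sref_eq_alpha_iff pos_neg[OF alpha_pos] by fastforce
    show "?Q \<subseteq> sref i ` ?Q"
    proof
      fix b assume b: "b \<in> ?Q"
      then have "sref i b \<in> ?Q" using W4 sref_eq_alpha_iff pos_neg[OF alpha_pos] by fastforce
      then have "sref i (sref i b) \<in> sref i ` ?Q" by (rule imageI)
      then show "b \<in> sref i ` ?Q" by simp
    qed
  qed
  have inj: "inj_on (sref i) ?Q" by (rule inj_onI, drule arg_cong[where f="sref i"], simp)
  have "sref i ?s = (\<Sum>b\<in>P. sref i b)" by (rule sref_sum)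
  also have "\<dots> = (\<Sum>b\<in>?Q. sref i b) + sref i (alpha i)"
    using finite_P alpha_pos by (simp add: sum.remove add.commute)
  also have "(\<Sum>b\<in>?Q. sref i b) = (\<Sum>b\<in>sref i ` ?Q. b)"
    using sum.reindex[OF inj, of id] by simp
  also have "\<dots> = (\<Sum>b\<in>?Q. b)" using img by simp
  also have "(\<Sum>b\<in>?Q. b) = ?s - alpha i"
    using finite_P alpha_pos by (simp add: sum_diff1)
  finally have eq: "sref i ?s = ?s - alpha i + sref i (alpha i)" .
  have "sref i ?s i = ?s i - 2 * ?s i" by (simp add: sref_def)
  moreover have "(?s - alpha i + sref i (alpha i)) i = ?s i - 4"
    by (simp add: sref_alpha) (simp add: alpha_def)
  ultimately show "?s i = 2" using eq by simp
qed


definition ht :: "weight \<Rightarrow> int" where "ht lam = (\<Sum>k\<in>UNIV. rc lam k)"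

lemma le_refl[simp]: "le a a" by (simp add: le_def)
lemma le_trans: "le a b \<Longrightarrow> le b c \<Longrightarrow> le a c" by (auto simp: le_def intro: order_trans)
lemma le_antisym: "le a b \<Longrightarrow> le b a \<Longrightarrow> a = b"
  by (rule rc_inj) (auto simp: le_def intro: order_antisym)
lemma le_add: "le a b \<Longrightarrow> le c d \<Longrightarrow> le (a + c) (b + d)"
  by (auto simp: le_def intro: add_mono)
lemma le_ht: "le a b \<Longrightarrow> ht a \<le> ht b"
  unfolding le_def ht_def by (rule sum_mono) simp
lemma le_ht_eq: "le a b \<Longrightarrow> ht a = ht b \<Longrightarrow> a = b"
proof -
  assume l: "le a b" and h: "ht a = ht b"
  have "(\<Sum>k\<in>UNIV. rc b k - rc a k) = 0" using h by (simp add: ht_def sum_subtractf)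
  moreover have "\<forall>k\<in>UNIV. rc b k - rc a k \<ge> 0" using l by (simp add: le_def)
  ultimately have "\<forall>k\<in>UNIV. rc b k - rc a k = 0"
    using sum_nonneg_eq_0_iff[of UNIV "\<lambda>k. rc b k - rc a k"] by simp
  then show "a = b" by (intro rc_inj) simp
qed
lemma le_ht_less: "le a b \<Longrightarrow> a \<noteq> b \<Longrightarrow> ht a < ht b"
  using le_ht le_ht_eq by fastforce
lemma dom_rc_nonneg: "dom lam \<Longrightarrow> rc lam k \<ge> 0"
  unfolding rc_def dom_def by (intro sum_nonneg) (simp add: Einv_nonneg)
lemma dom_ht_nonneg: "dom lam \<Longrightarrow> ht lam \<ge> 0"
  unfolding ht_def by (intro sum_nonneg) (simp add: dom_rc_nonneg)
lemma ht_sref: "ht (sref i lam) = ht lam - lam i"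
  by (simp add: ht_def rc_sref sum_subtractf)

lemma lookup_ex: "Poly_Mapping.lookup (ex a) b = (if a = b then 1 else 0)"
  unfolding ex_def lookup_single when_def by simp

lemma lookup_mult': "Poly_Mapping.lookup ((f::grpring) * g) k = (\<Sum>l\<in>Poly_Mapping.keys f. Poly_Mapping.lookup f l * Poly_Mapping.lookup g (k - l))"
proof -
  have inner: "(\<Sum>q. Poly_Mapping.lookup g q when k = l + q) = Poly_Mapping.lookup g (k - l)" for l :: weight
  proof -
    have "(\<lambda>q::weight. Poly_Mapping.lookup g q when k = l + q) = (\<lambda>q. if q = k - l then Poly_Mapping.lookup g q else 0)"
      by (rule ext) (auto simp: when_def algebra_simps)
    then show ?thesis by (simp only:) (rule Sum_any.delta)
  qed
  have "Poly_Mapping.lookup (f * g) k = (\<Sum>l. Poly_Mapping.lookup f l * Poly_Mapping.lookup g (k - l))"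
    by (simp add: lookup_mult inner)
  also have "\<dots> = (\<Sum>l\<in>Poly_Mapping.keys f. Poly_Mapping.lookup f l * Poly_Mapping.lookup g (k - l))"
    by (rule Sum_any.expand_superset) (auto simp: in_keys_iff)
  finally show ?thesis .
qed

lemma lookup_ofint_mult: "Poly_Mapping.lookup (of_int c * p) k = c * Poly_Mapping.lookup (p::grpring) k"
proof -
  have oi: "(of_int c :: grpring) = Poly_Mapping.single 0 c"
  proof -
    have "Poly_Mapping.single 0 (of_int c :: int) = (of_int c :: grpring)" by (rule single_of_int)
    then have "Poly_Mapping.single 0 c = (of_int c :: grpring)" by (simp only: of_int_eq_id id_apply)
    then show ?thesis by (rule sym)
  qed
  show ?thesis
  proof (cases "c = 0")
    case True then show ?thesis by simp
  next
    case False
    then have "Poly_Mapping.keys (of_int c :: grpring) = {0}" by (simp add: oi)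
    then show ?thesis by (simp add: lookup_mult' oi)
  qed
qed

lemma lookup_ofint_ex: "Poly_Mapping.lookup (of_int c * ex a) b = (if a = b then c else 0)"
  by (simp add: lookup_ofint_mult lookup_ex)

section \<open>Triangularity\<close>

definition tri :: "grpring \<Rightarrow> weight \<Rightarrow> bool" where
  "tri f a \<longleftrightarrow> (\<forall>v. Poly_Mapping.lookup f v \<noteq> 0 \<longrightarrow> le v a) \<and> Poly_Mapping.lookup f a = 1"

lemma tri_mult: "tri f a \<Longrightarrow> tri g b \<Longrightarrow> tri (f * g) (a + b)"
proof -
  assume f: "tri f a" and g: "tri g b"
  have supp: "le v (a + b)" if "Poly_Mapping.lookup (f * g) v \<noteq> 0" for v
  proof -
    from that obtain l where "l \<in> Poly_Mapping.keys f" "Poly_Mapping.lookup f l * Poly_Mapping.lookup g (v - l) \<noteq> 0"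
      unfolding lookup_mult' by (meson sum.not_neutral_contains_not_neutral)
    then have "Poly_Mapping.lookup f l \<noteq> 0" "Poly_Mapping.lookup g (v - l) \<noteq> 0" by auto
    then have "le l a" "le (v - l) b" using f g by (auto simp: tri_def)
    then have "le (l + (v - l)) (a + b)" by (rule le_add)
    then show ?thesis by simp
  qed
  have top: "Poly_Mapping.lookup (f * g) (a + b) = 1"
  proof -
    have ak: "a \<in> Poly_Mapping.keys f" using f by (simp add: tri_def in_keys_iff)
    have z: "Poly_Mapping.lookup f l * Poly_Mapping.lookup g (a + b - l) = 0" if "l \<in> Poly_Mapping.keys f - {a}" for l
    proof (rule ccontr)
      assume "Poly_Mapping.lookup f l * Poly_Mapping.lookup g (a + b - l) \<noteq> 0"
      then have "Poly_Mapping.lookup f l \<noteq> 0" "Poly_Mapping.lookup g (a + b - l) \<noteq> 0" by auto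
      then have la: "le l a" and lb: "le (a + b - l) b" using f g by (auto simp: tri_def)
      have "le a l" using lb by (auto simp: le_def)
      then have "l = a" using la le_antisym by blast
      then show False using that by simp
    qed
    have "Poly_Mapping.lookup (f * g) (a + b) = Poly_Mapping.lookup f a * Poly_Mapping.lookup g (a + b - a) + (\<Sum>l\<in>Poly_Mapping.keys f - {a}. Poly_Mapping.lookup f l * Poly_Mapping.lookup g (a + b - l))"
      unfolding lookup_mult' using ak by (simp add: sum.remove)
    also have "\<dots> = 1"
    proof -
      have "(\<Sum>l\<in>Poly_Mapping.keys f - {a}. Poly_Mapping.lookup f l * Poly_Mapping.lookup g (a + b - l)) = 0"
        by (rule sum.neutral) (use z in blast)
      then show ?thesis using f g by (simp add: tri_def)
    qed
    finally show ?thesis .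
  qed
  show ?thesis using supp top by (simp add: tri_def)
qed

lemma tri_one: "tri 1 0"
  by (simp add: tri_def lookup_one when_def)

lemma tri_pow: "tri f a \<Longrightarrow> tri (f ^ n) (smul (int n) a)"
proof (induction n)
  case 0
  have "smul (int 0) a = 0" by (simp add: smul_def fun_eq_iff)
  then show ?case using tri_one by (simp only: power_0)
next
  case (Suc n)
  have "tri (f * f ^ n) (a + smul (int n) a)" by (rule tri_mult[OF Suc.prems Suc.IH[OF Suc.prems]])
  moreover have "a + smul (int n) a = smul (int (Suc n)) a" by (simp add: smul_def fun_eq_iff algebra_simps)
  ultimately show ?case by simp
qed

lemma tri_prod: "finite I \<Longrightarrow> (\<And>i. i \<in> I \<Longrightarrow> tri (f i) (a i)) \<Longrightarrow> tri (\<Prod>i\<in>I. f i) (\<Sum>i\<in>I. a i)"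
proof (induction I rule: finite_induct)
  case empty then show ?case using tri_one by (simp only: prod.empty sum.empty)
next
  case (insert x F)
  have "tri (f x * (\<Prod>i\<in>F. f i)) (a x + (\<Sum>i\<in>F. a i))"
    using insert by (intro tri_mult) auto
  then show ?case by (simp only: prod.insert[OF insert.hyps] sum.insert[OF insert.hyps])
qed


abbreviation lk :: "grpring \<Rightarrow> weight \<Rightarrow> int" where "lk \<equiv> Poly_Mapping.lookup"

lemma lookup_alt: "lk (alt mu) v = (\<Sum>w\<in>weyl. if w mu = v then wsign w else 0)"
  unfolding alt_def by (simp add: lookup_sum lookup_ofint_ex)

lemma sum_weyl_delta:
  assumes mu: "sdom mu" and w0: "w0 \<in> weyl"
  shows "(\<Sum>w\<in>weyl. if w mu = w0 mu then f w else 0) = (f w0 :: int)"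
proof -
  have iff: "w mu = w0 mu \<longleftrightarrow> w = w0" if "w \<in> weyl" for w
    using weyl_eq_sdom[OF mu that w0] by auto
  have "(\<Sum>w\<in>weyl. if w mu = w0 mu then f w else 0) = (\<Sum>w\<in>weyl. if w = w0 then f w else 0)"
    by (rule sum.cong[OF refl]) (simp add: iff)
  also have "\<dots> = f w0" using w0 finite_weyl by simp
  finally show ?thesis .
qed

lemma lookup_alt_orbit: "sdom mu \<Longrightarrow> w0 \<in> weyl \<Longrightarrow> lk (alt mu) (w0 mu) = wsign w0"
  unfolding lookup_alt by (rule sum_weyl_delta)

lemma lookup_alt_top: "sdom mu \<Longrightarrow> lk (alt mu) mu = 1"
  using lookup_alt_orbit[of mu id] weyl_id wsign_id by simp

lemma lookup_alt_nz: "lk (alt mu) v \<noteq> 0 \<Longrightarrow> \<exists>w\<in>weyl. v = w mu"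
proof (rule ccontr)
  assume nz: "lk (alt mu) v \<noteq> 0" and "\<not> (\<exists>w\<in>weyl. v = w mu)"
  then have "\<forall>w\<in>weyl. w mu \<noteq> v" by auto
  then have "lk (alt mu) v = 0" unfolding lookup_alt by (intro sum.neutral) auto
  then show False using nz by simp
qed

lemma sdom_dom: "sdom mu \<Longrightarrow> dom mu"
  by (simp add: sdom_def dom_def less_imp_le)

lemma tri_alt: "sdom mu \<Longrightarrow> tri (alt mu) mu"
  unfolding tri_def using lookup_alt_top lookup_alt_nz dominance sdom_dom by blast

definition AI :: "grpring \<Rightarrow> bool" where
  "AI h \<longleftrightarrow> (\<forall>i v. lk h (sref i v) = - lk h v)"

lemma AI_alt: "AI (alt mu)"
  unfolding AI_def
proof (intro allI)
  fix i v
  let ?g = "\<lambda>u. sref i \<circ> u"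
  have img: "?g ` weyl = weyl"
  proof
    show "?g ` weyl \<subseteq> weyl" using weyl_sref_left by blast
    show "weyl \<subseteq> ?g ` weyl"
    proof
      fix w assume w: "w \<in> weyl"
      have "w = ?g (sref i \<circ> w)" by (simp add: comp_assoc[symmetric])
      moreover have "sref i \<circ> w \<in> weyl" using w weyl_sref_left by blast
      ultimately show "w \<in> ?g ` weyl" by blast
    qed
  qed
  have inj: "inj_on ?g weyl"
  proof (rule inj_onI)
    fix u u' assume "?g u = ?g u'"
    then have "sref i \<circ> ?g u = sref i \<circ> ?g u'" by simp
    then show "u = u'" by (simp add: comp_assoc[symmetric])
  qed
  have "lk (alt mu) (sref i v) = (\<Sum>w\<in>?g ` weyl. if w mu = sref i v then wsign w else 0)"
    unfolding lookup_alt img ..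
  also have "\<dots> = (\<Sum>u\<in>weyl. if sref i (u mu) = sref i v then wsign (sref i \<circ> u) else 0)"
    by (subst sum.reindex[OF inj]) simp
  also have "\<dots> = (\<Sum>u\<in>weyl. - (if u mu = v then wsign u else 0))"
  proof (rule sum.cong[OF refl])
    fix u assume u: "u \<in> weyl"
    have "sref i (u mu) = sref i v \<longleftrightarrow> u mu = v"
      by (metis sref_sref)
    then show "(if sref i (u mu) = sref i v then wsign (sref i \<circ> u) else 0) = - (if u mu = v then wsign u else 0)"
      using wsign_sref_left[OF u] by simp
  qed
  also have "\<dots> = - lk (alt mu) v" unfolding lookup_alt by (simp add: sum_negf)
  finally show "lk (alt mu) (sref i v) = - lk (alt mu) v" .
qed

lemma AI_word: "AI h \<Longrightarrow> lk h (word is v) = (-1) ^ length is * lk h v"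
proof (induction "is" arbitrary: v)
  case Nil then show ?case by simp
next
  case (Cons i "is")
  have "lk h (word (i # is) v) = lk h (sref i (word is v))" by simp
  also have "\<dots> = - lk h (word is v)" using Cons.prems by (simp add: AI_def)
  also have "\<dots> = (-1) ^ length (i # is) * lk h v" using Cons by simp
  finally show ?case .
qed

lemma AI_weyl: "AI h \<Longrightarrow> w \<in> weyl \<Longrightarrow> lk h (w v) = wsign w * lk h v"
proof -
  assume h: "AI h" and "w \<in> weyl"
  then obtain "is" where "w = word is" using weyl_word by blast
  then show ?thesis using AI_word[OF h] wsign_word by simp
qed

lemma AI_diff: "AI a \<Longrightarrow> AI b \<Longrightarrow> AI (a - b)"
  by (simp add: AI_def lookup_minus)

lemma AI_add: "AI a \<Longrightarrow> AI b \<Longrightarrow> AI (a + b)"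
  by (simp add: AI_def lookup_add)

lemma AI_ofint: "AI a \<Longrightarrow> AI (of_int c * a)"
  by (simp add: AI_def lookup_ofint_mult)

lemma decomp:
  "AI h \<Longrightarrow> \<exists>M c. finite M \<and> M \<subseteq> Poly_Mapping.keys h \<and> (\<forall>mu\<in>M. sdom mu) \<and>
     h = (\<Sum>mu\<in>M. of_int (c mu) * alt mu)"
proof (induction "card (Poly_Mapping.keys h)" arbitrary: h rule: less_induct)
  case less
  show ?case
  proof (cases "h = 0")
    case True
    show ?thesis by (rule exI[of _ "{}"]) (simp add: True)
  next
    case False
    then have ne: "Poly_Mapping.keys h \<noteq> {}" by simp
    let ?K = "Poly_Mapping.keys h"
    have fK: "finite ?K" by simp
    define m where "m = Max (ht ` ?K)"
    have "m \<in> ht ` ?K" unfolding m_def using fK ne by (intro Max_in) auto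
    then obtain mu where mu: "mu \<in> ?K" "ht mu = m" by blast
    have mumax: "ht v \<le> ht mu" if "v \<in> ?K" for v
      unfolding mu(2) m_def using fK that by (intro Max_ge) auto
    have lmu: "lk h mu \<noteq> 0" using mu(1) by (simp add: in_keys_iff)
    have sd: "sdom mu"
      unfolding sdom_def
    proof
      fix i
      show "mu i > 0"
      proof (rule ccontr)
        assume nmu: "\<not> mu i > 0"
        have l: "lk h (sref i mu) = - lk h mu" using less.prems by (simp add: AI_def)
        show False
        proof (cases "mu i = 0")
          case True
          then have "sref i mu = mu" by (simp add: sref_def)
          then show False using l lmu by simp
        next
          case False
          then have neg: "mu i < 0" using nmu by simp
          have "sref i mu \<in> ?K" using l lmu by (simp add: in_keys_iff)
          then have "ht (sref i mu) \<le> ht mu" by (rule mumax)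
          then show False using neg by (simp add: ht_sref)
        qed
      qed
    qed
    define h' where "h' = h - of_int (lk h mu) * alt mu"
    have lk': "lk h' v = lk h v - lk h mu * lk (alt mu) v" for v
      by (simp add: h'_def lookup_minus lookup_ofint_mult)
    have sub: "Poly_Mapping.keys h' \<subseteq> ?K - {mu}"
    proof
      fix v assume v: "v \<in> Poly_Mapping.keys h'"
      then have v0: "lk h' v \<noteq> 0" by (simp add: in_keys_iff)
      show "v \<in> ?K - {mu}"
      proof (cases "lk (alt mu) v = 0")
        case True
        then have "lk h v \<noteq> 0" using v0 lk' by simp
        moreover have "v \<noteq> mu" using True lookup_alt_top[OF sd] by auto
        ultimately show ?thesis by (simp add: in_keys_iff)
      next
        case False
        then obtain w where w: "w \<in> weyl" "v = w mu" using lookup_alt_nz by blast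
        have "lk h' v = 0"
          using lk'[of v] w lookup_alt_orbit[OF sd w(1)] AI_weyl[OF less.prems w(1)] by simp
        then show ?thesis using v0 by simp
      qed
    qed
    have lt: "card (Poly_Mapping.keys h') < card ?K"
    proof (rule psubset_card_mono[OF fK])
      show "Poly_Mapping.keys h' \<subset> ?K" using sub mu(1) by blast
    qed
    have AIh': "AI h'" unfolding h'_def by (intro AI_diff less.prems AI_ofint AI_alt)
    obtain M c where M: "finite M" "M \<subseteq> Poly_Mapping.keys h'" "\<forall>mu\<in>M. sdom mu"
      "h' = (\<Sum>mu\<in>M. of_int (c mu) * alt mu)"
      using less.hyps[OF lt AIh'] by blast
    have muM: "mu \<notin> M" using M(2) sub by blast
    define c' where "c' = c(mu := lk h mu)"
    have "h = h' + of_int (lk h mu) * alt mu" by (simp add: h'_def)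
    also have "h' = (\<Sum>x\<in>M. of_int (c' x) * alt x)"
      unfolding M(4) by (rule sum.cong[OF refl]) (use muM in \<open>auto simp: c'_def\<close>)
    also have "(\<Sum>x\<in>M. of_int (c' x) * alt x) + of_int (lk h mu) * alt mu = (\<Sum>x\<in>insert mu M. of_int (c' x) * alt x)"
      using M(1) muM by (simp add: c'_def add.commute)
    finally have eq: "h = (\<Sum>x\<in>insert mu M. of_int (c' x) * alt x)" .
    show ?thesis
    proof (intro exI conjI)
      show "finite (insert mu M)" using M(1) by simp
      show "insert mu M \<subseteq> ?K" using M(2) sub mu(1) by blast
      show "\<forall>x\<in>insert mu M. sdom x" using M(3) sd by blast
    qed (rule eq)
  qed
qed


definition orbit :: "weight \<Rightarrow> weight set" where "orbit lam = (\<lambda>w. w lam) ` weyl"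

lemma finite_orbit: "finite (orbit lam)"
  unfolding orbit_def using finite_weyl by simp

definition orb :: "weight \<Rightarrow> grpring" where "orb lam = (\<Sum>v\<in>orbit lam. ex v)"

lemma lookup_orb: "lk (orb lam) v = (if v \<in> orbit lam then 1 else 0)"
  unfolding orb_def lookup_sum lookup_ex using finite_orbit by simp

lemma orbit_sref: "sref i v \<in> orbit lam \<longleftrightarrow> v \<in> orbit lam"
proof
  assume "sref i v \<in> orbit lam"
  then obtain w where w: "w \<in> weyl" "sref i v = w lam" unfolding orbit_def by blast
  then have "v = (sref i \<circ> w) lam" by (metis comp_apply sref_sref)
  then show "v \<in> orbit lam" unfolding orbit_def using weyl_sref_left[OF w(1)] by blast
next
  assume "v \<in> orbit lam"
  then obtain w where w: "w \<in> weyl" "v = w lam" unfolding orbit_def by blast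
  then have "sref i v = (sref i \<circ> w) lam" by simp
  then show "sref i v \<in> orbit lam" unfolding orbit_def using weyl_sref_left[OF w(1)] by blast
qed

definition INV :: "grpring \<Rightarrow> bool" where
  "INV f \<longleftrightarrow> (\<forall>i v. lk f (sref i v) = lk f v)"

lemma INV_orb: "INV (orb lam)"
  by (simp add: INV_def lookup_orb orbit_sref)

lemma tri_orb: "dom lam \<Longrightarrow> tri (orb lam) lam"
proof -
  assume d: "dom lam"
  have "lam \<in> orbit lam" unfolding orbit_def
    using image_eqI[of lam "\<lambda>w. w lam" id weyl] weyl_id by simp
  moreover have "le v lam" if "v \<in> orbit lam" for v
    using that dominance[OF d] unfolding orbit_def by blast
  ultimately show ?thesis unfolding tri_def lookup_orb by auto
qed

lemma INV_AI_mult: "INV f \<Longrightarrow> AI g \<Longrightarrow> AI (f * g)"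
  unfolding AI_def
proof (intro allI)
  fix i k
  assume f: "INV f" and g: "\<forall>i v. lk g (sref i v) = - lk g v"
  let ?K = "Poly_Mapping.keys f"
  have img: "sref i ` ?K = ?K"
  proof
    show "sref i ` ?K \<subseteq> ?K" using f by (auto simp: INV_def in_keys_iff)
    show "?K \<subseteq> sref i ` ?K"
    proof
      fix l assume "l \<in> ?K"
      then have "sref i l \<in> ?K" using f by (auto simp: INV_def in_keys_iff)
      then have "sref i (sref i l) \<in> sref i ` ?K" by (rule imageI)
      then show "l \<in> sref i ` ?K" by simp
    qed
  qed
  have inj: "inj_on (sref i) ?K" by (rule inj_onI, drule arg_cong[where f="sref i"], simp)
  have "lk (f * g) (sref i k) = (\<Sum>l\<in>sref i ` ?K. lk f l * lk g (sref i k - l))"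
    unfolding lookup_mult' img ..
  also have "\<dots> = (\<Sum>l\<in>?K. lk f (sref i l) * lk g (sref i k - sref i l))"
    by (subst sum.reindex[OF inj]) simp
  also have "\<dots> = (\<Sum>l\<in>?K. - (lk f l * lk g (k - l)))"
  proof (rule sum.cong[OF refl])
    fix l
    have "lk g (sref i k - sref i l) = - lk g (k - l)" using g by (simp add: sref_diff[symmetric])
    then show "lk f (sref i l) * lk g (sref i k - sref i l) = - (lk f l * lk g (k - l))"
      using f by (simp add: INV_def)
  qed
  also have "\<dots> = - lk (f * g) k" unfolding lookup_mult' by (simp add: sum_negf)
  finally show "lk (f * g) (sref i k) = - lk (f * g) k" .
qed

section \<open>Existence and uniqueness of characters\<close>

lemma rho_sdom: "sdom rho" by (simp add: sdom_def rho_def)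

lemma tri_lookup_zero: "tri f a \<Longrightarrow> \<not> le v a \<Longrightarrow> lk f v = 0"
  unfolding tri_def by blast

lemma exist: "dom lam \<Longrightarrow> \<exists>chi. chi * alt rho = alt (lam + rho) \<and> tri chi lam"
proof (induction "nat (ht lam)" arbitrary: lam rule: less_induct)
  case less
  have dl: "dom lam" by (rule less.prems)
  define S where "S = orb lam"
  define Ar where "Ar = alt rho"
  define X where "X = S * Ar"
  define Y where "Y = alt (lam + rho)"
  define h where "h = X - Y"
  have sdY: "sdom (lam + rho)" using dl by (simp add: sdom_def dom_def rho_def add_nonneg_pos)
  have triX: "tri X (lam + rho)" unfolding X_def S_def Ar_def
    by (intro tri_mult tri_orb dl tri_alt rho_sdom)
  have triY: "tri Y (lam + rho)" unfolding Y_def by (rule tri_alt[OF sdY])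
  have AIh: "AI h" unfolding h_def X_def Y_def S_def Ar_def
    by (intro AI_diff INV_AI_mult INV_orb AI_alt)
  have hsupp: "le v (lam + rho) \<and> v \<noteq> lam + rho" if "lk h v \<noteq> 0" for v
  proof
    have "lk X v \<noteq> 0 \<or> lk Y v \<noteq> 0" using that by (auto simp: h_def lookup_minus)
    then show "le v (lam + rho)" using triX triY by (auto simp: tri_def)
    show "v \<noteq> lam + rho" using that triX triY by (auto simp: tri_def h_def lookup_minus)
  qed
  obtain M c where M: "finite M" "M \<subseteq> Poly_Mapping.keys h" "\<forall>mu\<in>M. sdom mu"
    "h = (\<Sum>mu\<in>M. of_int (c mu) * alt mu)"
    using decomp[OF AIh] by blast
  have Mprop: "le (mu - rho) lam \<and> mu - rho \<noteq> lam \<and> dom (mu - rho)" if mu: "mu \<in> M" for mu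
  proof (intro conjI)
    have "lk h mu \<noteq> 0" using M(2) mu by (auto simp: in_keys_iff)
    then have hs: "le mu (lam + rho)" "mu \<noteq> lam + rho" using hsupp by blast+
    show "le (mu - rho) lam" unfolding le_def
    proof
      fix k
      have "rc mu k \<le> rc (lam + rho) k" using hs(1) by (simp only: le_def)
      then show "rc (mu - rho) k \<le> rc lam k" by simp
    qed
    show "mu - rho \<noteq> lam" using hs(2) by auto
    show "dom (mu - rho)" using M(3) mu by (simp add: sdom_def dom_def rho_def)
  qed
  have "\<forall>mu\<in>M. \<exists>chi. chi * Ar = alt mu \<and> tri chi (mu - rho)"
  proof
    fix mu assume mu: "mu \<in> M"
    have mp: "le (mu - rho) lam" "mu - rho \<noteq> lam" "dom (mu - rho)" using Mprop[OF mu] by blast+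
    have "ht (mu - rho) < ht lam" using le_ht_less[OF mp(1) mp(2)] .
    then have lt: "nat (ht (mu - rho)) < nat (ht lam)" using dom_ht_nonneg[OF mp(3)] by simp
    obtain chi where "chi * alt rho = alt (mu - rho + rho)" "tri chi (mu - rho)"
      using less.hyps[OF lt mp(3)] by blast
    then show "\<exists>chi. chi * Ar = alt mu \<and> tri chi (mu - rho)" unfolding Ar_def by auto
  qed
  then obtain F where F: "\<And>mu. mu \<in> M \<Longrightarrow> F mu * Ar = alt mu \<and> tri (F mu) (mu - rho)"
    by metis
  define chi where "chi = S - (\<Sum>mu\<in>M. of_int (c mu) * F mu)"
  have "chi * Ar = X - (\<Sum>mu\<in>M. of_int (c mu) * (F mu * Ar))"
    unfolding chi_def X_def by (simp add: left_diff_distrib sum_distrib_right mult.assoc)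
  also have "(\<Sum>mu\<in>M. of_int (c mu) * (F mu * Ar)) = h"
    unfolding M(4) by (rule sum.cong[OF refl]) (simp add: F)
  also have "X - h = Y" by (simp add: h_def)
  finally have eq: "chi * Ar = Y" .
  have lkchi: "lk chi v = lk S v - (\<Sum>mu\<in>M. c mu * lk (F mu) v)" for v
    by (simp add: chi_def lookup_minus lookup_sum lookup_ofint_mult)
  have supp: "le v lam" if "lk chi v \<noteq> 0" for v
  proof (rule ccontr)
    assume nl: "\<not> le v lam"
    have "lk S v = 0" using tri_lookup_zero[OF tri_orb[OF dl] nl] by (simp add: S_def)
    moreover have "lk (F mu) v = 0" if mu: "mu \<in> M" for mu
    proof (rule tri_lookup_zero)
      show "tri (F mu) (mu - rho)" using F[OF mu] by blast
      show "\<not> le v (mu - rho)" using nl Mprop[OF mu] le_trans by blast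
    qed
    ultimately have "lk chi v = 0" unfolding lkchi by simp
    then show False using that by simp
  qed
  have top: "lk chi lam = 1"
  proof -
    have "lk (F mu) lam = 0" if mu: "mu \<in> M" for mu
    proof (rule tri_lookup_zero)
      show "tri (F mu) (mu - rho)" using F[OF mu] by blast
      show "\<not> le lam (mu - rho)" using Mprop[OF mu] le_antisym by blast
    qed
    moreover have "lk S lam = 1" using tri_orb[OF dl] by (simp add: S_def tri_def)
    ultimately show ?thesis unfolding lkchi by simp
  qed
  show ?case using eq supp top unfolding Ar_def Y_def tri_def by blast
qed

lemma uniq: "chi1 * alt rho = chi2 * alt rho \<Longrightarrow> chi1 = chi2"
proof (rule ccontr)
  assume eq: "chi1 * alt rho = chi2 * alt rho" and ne: "chi1 \<noteq> chi2"
  define d where "d = chi1 - chi2"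
  have d0: "d * alt rho = 0" using eq by (simp add: d_def left_diff_distrib)
  have dne: "d \<noteq> 0" using ne by (simp add: d_def)
  let ?K = "Poly_Mapping.keys d"
  have fK: "finite ?K" by simp
  have neK: "?K \<noteq> {}" using dne by simp
  define m where "m = Max (ht ` ?K)"
  have "m \<in> ht ` ?K" unfolding m_def using fK neK by (intro Max_in) auto
  then obtain nu where nu: "nu \<in> ?K" "ht nu = m" by blast
  have numax: "ht v \<le> ht nu" if "v \<in> ?K" for v
    unfolding nu(2) m_def using fK that by (intro Max_ge) auto
  have triA: "tri (alt rho) rho" by (rule tri_alt[OF rho_sdom])
  have z: "lk d l * lk (alt rho) (nu + rho - l) = 0" if l: "l \<in> ?K - {nu}" for l
  proof (rule ccontr)
    assume "lk d l * lk (alt rho) (nu + rho - l) \<noteq> 0"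
    then have "lk (alt rho) (nu + rho - l) \<noteq> 0" by auto
    then have "le (nu + rho - l) rho" using triA by (auto simp: tri_def)
    then have lnl: "le nu l" by (auto simp: le_def)
    have "ht l \<le> ht nu" using numax l by blast
    then have "ht nu = ht l" using le_ht[OF lnl] by simp
    then have "nu = l" using le_ht_eq[OF lnl] by simp
    then show False using l by simp
  qed
  have A: "lk (d * alt rho) (nu + rho) = lk d nu * lk (alt rho) (nu + rho - nu) + (\<Sum>l\<in>?K - {nu}. lk d l * lk (alt rho) (nu + rho - l))"
    unfolding lookup_mult' using nu(1) fK by (simp only: sum.remove)
  have B: "(\<Sum>l\<in>?K - {nu}. lk d l * lk (alt rho) (nu + rho - l)) = 0"
    by (rule sum.neutral) (use z in blast)
  have "nu + rho - nu = rho" by (simp add: fun_eq_iff)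
  then have C: "lk (alt rho) (nu + rho - nu) = 1" using triA by (simp add: tri_def)
  have "lk (d * alt rho) (nu + rho) = lk d nu" unfolding A B C by simp
  then have "lk d nu = 0" unfolding d0 by simp
  then show False using nu(1) by (simp add: in_keys_iff)
qed

lemma irrchar_tri: "dom lam \<Longrightarrow> tri (irrchar lam) lam"
proof -
  assume "dom lam"
  then obtain chi where chi: "chi * alt rho = alt (lam + rho)" "tri chi lam" using exist by blast
  have "irrchar lam = chi" unfolding irrchar_def
    by (rule the_equality) (use chi uniq in auto)
  then show ?thesis using chi by simp
qed


definition wt :: "(8 \<Rightarrow> nat) \<Rightarrow> weight" where "wt kap = (\<lambda>j. int (kap j))"

lemma wt_inj: "wt a = wt b \<Longrightarrow> a = b"
  by (simp add: wt_def fun_eq_iff)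

lemma dom_omega: "dom (omega l)" by (simp add: dom_def omega_def)

lemma fundchar_tri: "tri (fundchar l) (omega l)"
  unfolding fundchar_def by (rule irrchar_tri[OF dom_omega])

lemma fundmono_tri: "tri (fundmono kap) (wt kap)"
proof -
  have "tri (\<Prod>l\<in>UNIV. fundchar l ^ kap l) (\<Sum>l\<in>UNIV. smul (int (kap l)) (omega l))"
    by (rule tri_prod) (simp_all add: tri_pow fundchar_tri)
  moreover have "(\<Sum>l\<in>UNIV. smul (int (kap l)) (omega l)) = wt kap"
    by (rule ext) (simp add: sum_fun_apply smul_def omega_def wt_def)
  ultimately show ?thesis unfolding fundmono_def by simp
qed

lemma finite_adj: "finite adj_index"
  unfolding adj_index_def using finite_roots by simp

lemma extchar_supp: "lk (extchar k) v \<noteq> 0 \<Longrightarrow> le v (\<lambda>_. 2)"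
proof -
  assume nz: "lk (extchar k) v \<noteq> 0"
  let ?SS = "{S. S \<subseteq> adj_index \<and> card S = k}"
  have e: "lk (extchar k) v = (\<Sum>S\<in>?SS. if (\<Sum>x\<in>S. adj_wt x) = v then 1 else 0)"
    unfolding extchar_def lookup_sum lookup_ex ..
  have "\<exists>S\<in>?SS. (\<Sum>x\<in>S. adj_wt x) = v"
  proof (rule ccontr)
    assume "\<not> (\<exists>S\<in>?SS. (\<Sum>x\<in>S. adj_wt x) = v)"
    then have "(\<Sum>S\<in>?SS. if (\<Sum>x\<in>S. adj_wt x) = v then 1 else 0) = (0::int)"
      by (intro sum.neutral) auto
    then show False using nz e by simp
  qed
  then obtain S where S: "S \<subseteq> adj_index" "(\<Sum>x\<in>S. adj_wt x) = v" by blast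
  have fS: "finite S" using S(1) finite_adj finite_subset by blast
  let ?A = "Inl ` P :: (weight + 8) set"
  show "le v (\<lambda>_. 2)"
    unfolding le_def
  proof
    fix k
    let ?f = "\<lambda>x. rc (adj_wt x) k"
    have "rc v k = (\<Sum>x\<in>S. ?f x)" unfolding S(2)[symmetric] by (rule rc_sum)
    also have "\<dots> = (\<Sum>x\<in>S \<inter> ?A. ?f x) + (\<Sum>x\<in>S - ?A. ?f x)"
      using fS by (simp add: sum.Int_Diff)
    also have "(\<Sum>x\<in>S - ?A. ?f x) \<le> 0"
    proof (rule sum_nonpos)
      fix x assume x: "x \<in> S - ?A"
      then have xa: "x \<in> adj_index" using S(1) by blast
      show "?f x \<le> 0"
      proof (cases x)
        case (Inl b)
        then have b: "b \<in> roots" "b \<notin> P" using x xa by (auto simp: adj_index_def)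
        then have "\<not> (\<forall>k. rc b k \<ge> 0)" by (simp add: pos_iff)
        then have "\<forall>k. rc b k \<le> 0" using root_sign[OF b(1)] by blast
        then show ?thesis using Inl by (simp add: adj_wt_def)
      next
        case (Inr i)
        then show ?thesis by (simp add: adj_wt_def)
      qed
    qed
    also have "(\<Sum>x\<in>S \<inter> ?A. ?f x) + 0 \<le> (\<Sum>x\<in>?A. ?f x)"
    proof -
      have "(\<Sum>x\<in>S \<inter> ?A. ?f x) \<le> (\<Sum>x\<in>?A. ?f x)"
      proof (rule sum_mono2)
        show "finite ?A" using finite_P by simp
        show "S \<inter> ?A \<subseteq> ?A" by blast
        show "0 \<le> ?f b" if "b \<in> ?A - S \<inter> ?A" for b
          using that by (auto simp: adj_wt_def pos_iff)
      qed
      then show ?thesis by simp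
    qed
    also have "(\<Sum>x\<in>?A. ?f x) = (\<Sum>b\<in>P. rc b k)"
      by (subst sum.reindex) (auto simp: adj_wt_def inj_on_def)
    also have "\<dots> = rc (\<Sum>b\<in>P. b) k" by (simp add: rc_sum)
    also have "\<dots> = rc (\<lambda>_. 2) k" by (simp only: sum_pos_roots)
    finally show "rc v k \<le> rc (\<lambda>_. 2) k" by simp
  qed
qed

lemma adm_iff: "kap \<in> admissible \<longleftrightarrow> (\<forall>k. rc (wt kap) k \<le> rc (\<lambda>_. 2) k)"
proof -
  have l: "(\<Sum>j\<in>UNIV. of_nat (kap j) * einv j k) = (of_int (rc (wt kap) k) :: rat)" for k
    by (simp add: einv_eq rc_def wt_def)
  have r: "2 * (\<Sum>j\<in>UNIV. einv j k) = (of_int (rc (\<lambda>_. 2) k) :: rat)" for k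
    by (simp add: einv_eq rc_def sum_distrib_left)
  show ?thesis unfolding admissible_def by (simp add: l r)
qed

theorem lemma2p3:
  fixes k :: nat and N :: "(8 \<Rightarrow> nat) \<Rightarrow> int" and \<iota> :: "8 \<Rightarrow> nat"
  assumes "k \<le> 248"
    and "finite {\<kappa>. N \<kappa> \<noteq> 0}"
    and "extchar k = (\<Sum>\<kappa>\<in>{\<kappa>. N \<kappa> \<noteq> 0}. of_int (N \<kappa>) * fundmono \<kappa>)"
    and "\<iota> \<notin> admissible"
  shows "N \<iota> = 0"
proof (rule ccontr)
  assume Ni: "N \<iota> \<noteq> 0"
  let ?Z = "{\<kappa>. N \<kappa> \<noteq> 0}"
  let ?T = "{\<kappa>. N \<kappa> \<noteq> 0 \<and> \<kappa> \<notin> admissible}"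
  have fT: "finite ?T" using assms(2) by (rule finite_subset[rotated]) blast
  have iT: "\<iota> \<in> ?T" using Ni assms(4) by blast
  define m where "m = Max ((\<lambda>\<kappa>. ht (wt \<kappa>)) ` ?T)"
  have "m \<in> (\<lambda>\<kappa>. ht (wt \<kappa>)) ` ?T" unfolding m_def using fT iT by (intro Max_in) auto
  then obtain ks where ks: "ks \<in> ?T" "ht (wt ks) = m" by blast
  have ksmax: "ht (wt \<kappa>) \<le> ht (wt ks)" if "\<kappa> \<in> ?T" for \<kappa>
    unfolding ks(2) m_def using fT that by (intro Max_ge) auto
  have "\<not> (\<forall>k. rc (wt ks) k \<le> rc (\<lambda>_. 2) k)" using ks(1) adm_iff by blast
  then obtain k0 where k0: "rc (wt ks) k0 > rc (\<lambda>_. 2) k0" by (auto simp: not_le)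
  have lhs: "lk (extchar k) (wt ks) = 0"
  proof (rule ccontr)
    assume "lk (extchar k) (wt ks) \<noteq> 0"
    then have "le (wt ks) (\<lambda>_. 2)" by (rule extchar_supp)
    then show False using k0 by (simp add: le_def not_le[symmetric])
  qed
  have z: "N \<kappa> * lk (fundmono \<kappa>) (wt ks) = 0" if ka: "\<kappa> \<in> ?Z - {ks}" for \<kappa>
  proof (rule ccontr)
    assume "N \<kappa> * lk (fundmono \<kappa>) (wt ks) \<noteq> 0"
    then have "lk (fundmono \<kappa>) (wt ks) \<noteq> 0" by auto
    then have lek: "le (wt ks) (wt \<kappa>)" using fundmono_tri[of \<kappa>] by (auto simp: tri_def)
    have "wt ks \<noteq> wt \<kappa>" using ka wt_inj by blast
    then have hlt: "ht (wt ks) < ht (wt \<kappa>)" using le_ht_less[OF lek] by simp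
    have "rc (wt \<kappa>) k0 > rc (\<lambda>_. 2) k0" using lek k0 by (auto simp: le_def intro: less_le_trans)
    then have "\<not> rc (wt \<kappa>) k0 \<le> rc (\<lambda>_. 2) k0" by simp
    then have "\<kappa> \<notin> admissible" unfolding adm_iff by blast
    then have "\<kappa> \<in> ?T" using ka by blast
    then show False using ksmax hlt by fastforce
  qed
  have ksZ: "ks \<in> ?Z" using ks(1) by blast
  have "lk (extchar k) (wt ks) = (\<Sum>\<kappa>\<in>?Z. N \<kappa> * lk (fundmono \<kappa>) (wt ks))"
    unfolding assms(3) lookup_sum lookup_ofint_mult ..
  also have "\<dots> = N ks * lk (fundmono ks) (wt ks) + (\<Sum>\<kappa>\<in>?Z - {ks}. N \<kappa> * lk (fundmono \<kappa>) (wt ks))"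
    using assms(2) ksZ by (simp add: sum.remove)
  also have "(\<Sum>\<kappa>\<in>?Z - {ks}. N \<kappa> * lk (fundmono \<kappa>) (wt ks)) = 0"
    by (rule sum.neutral) (use z in blast)
  also have "lk (fundmono ks) (wt ks) = 1" using fundmono_tri[of ks] by (simp add: tri_def)
  finally have "lk (extchar k) (wt ks) = N ks" by simp
  then show False using lhs ks(1) by simp
qed


end
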